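(* Assume there exists a measurable cardinal. Then in every mean-payoff game with limited-observation $G$, either Eve has a winning observation-based strategy or Adam has a winning observation-based strategy.
   Context: A mean-payoff game (MPG) with partial-observation is a tuple $G=\langle Q,q_I,\Sigma,\Delta,w,Obs\rangle$ where $Q$ is a finite set of states, $q_I\in Q$, $\Sigma$ is a finite set of actions, $\Delta\subseteq Q\times\Sigma\times Q$ is total (for every $(q,\sigma)$ there is $q'$ with $(q,\sigma,q')\in\Delta$), $w:\Delta\to\mathbb{Z}$, and $Obs$ is a partition of $Q$. For $s\subseteq Q$, $\mathrm{post}_\sigma(s)=\{q':\exists q\in s,(q,\sigma,q')\in\Delta\}$. $G$ is an MPG with limited-observation if moreover $\{q_I\}\in Obs$ and for each $o\in Obs$, $\sigma\in\Sigma$, the set $\mathrm{post}_\sigma(o)$ is a union of elements of $Obs$. An abstract path is a sequence $o_0\sigma_0o_1\ldots$ with $o_i\in Obs$, $\sigma_i\in\Sigma$ such that for each $i$ there are $q\in o_i,q'\in o_{i+1}$ with $(q,\sigma_i,q')\in\Delta$; $\gamma(\psi)$ denotes the set of concrete paths $q_0\sigma_0q_1\ldots$ with $q_i\in o_i$ and $(q_i,\sigma_i,q_{i+1})\in\Delta$. A play is an infinite abstract path starting at the observation containing $q_I$; $\mathrm{Prefs}(G)$ is the set of its finite prefixes ending in an observation. For a concrete path $\pi$, $w(\pi[..n])=\sum_{i<n}w(q_i,\sigma_i,q_{i+1})$ and $\underline{MP}(\pi)=\liminf_{n}\frac1n w(\pi[..n])$. A play $\psi$ is winning for Eve if $\underline{MP}(\pi)\ge0$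 for all $\pi\in\gamma(\psi)$, and winning for Adam otherwise. An observation-based strategy for Eve is $\lambda_\exists:\mathrm{Prefs}(G)\to\Sigma$; a play is consistent with it if $\sigma_i=\lambda_\exists(o_0\sigma_0\ldots o_i)$ for all $i$. An observation-based strategy for Adam is $\lambda_\forall:\mathrm{Prefs}(G)\times\Sigma\to Obs$ with $\lambda_\forall(o_0\sigma_0\ldots o_n,\sigma)\cap\mathrm{post}_\sigma(o_n)\neq\emptyset$; a play is consistent with it if $\lambda_\forall(o_0\sigma_0\ldots o_i,\sigma_i)=o_{i+1}$ for all $i$. A strategy is winning for a player if every play consistent with it is winning for that player. *)

theory Defs
  imports "HOL-Library.Equipollence" "HOL-Library.Disjoint_Sets"
    "HOL-Library.Liminf_Limsup" "HOL-Library.Extended_Real" "HOL-Library.Countable_Set"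
begin

definition ultrafilter_on :: "'u set \<Rightarrow> 'u set set \<Rightarrow> bool" where
  "ultrafilter_on X U \<longleftrightarrow>
     U \<subseteq> Pow X \<and> X \<in> U \<and> {} \<notin> U \<and>
     (\<forall>A B. A \<in> U \<and> B \<in> U \<longrightarrow> A \<inter> B \<in> U) \<and>
     (\<forall>A B. A \<in> U \<and> A \<subseteq> B \<and> B \<subseteq> X \<longrightarrow> B \<in> U) \<and>
     (\<forall>A. A \<subseteq> X \<longrightarrow> A \<in> U \<or> X - A \<in> U)"

definition measurable_cardinal :: "'u set \<Rightarrow> bool" where
  "measurable_cardinal X \<longleftrightarrow> uncountable X \<and>
     (\<exists>U. ultrafilter_on X U \<and> (\<forall>x\<in>X. {x} \<notin> U) \<and>
          (\<forall>F. F \<subseteq> U \<and> F \<noteq> {} \<and> F \<prec> X \<longrightarrow> \<Inter>F \<in> U))"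

definition post :: "('q \<times> 'a \<times> 'q) set \<Rightarrow> 'a \<Rightarrow> 'q set \<Rightarrow> 'q set" where
  "post Delta a s = {q'. \<exists>q\<in>s. (q, a, q') \<in> Delta}"

definition MPG_partial :: "'q set \<Rightarrow> 'q \<Rightarrow> 'a set \<Rightarrow> ('q \<times> 'a \<times> 'q) set \<Rightarrow> 'q set set \<Rightarrow> bool" where
  "MPG_partial Q qI Sig Delta Obs \<longleftrightarrow>
     finite Q \<and> qI \<in> Q \<and> finite Sig \<and> Delta \<subseteq> Q \<times> Sig \<times> Q \<and>
     (\<forall>q\<in>Q. \<forall>a\<in>Sig. \<exists>q'. (q, a, q') \<in> Delta) \<and>
     partition_on Q Obs"

definition MPG_limited :: "'q set \<Rightarrow> 'q \<Rightarrow> 'a set \<Rightarrow> ('q \<times> 'a \<times> 'q) set \<Rightarrow> 'q set set \<Rightarrow> bool" where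
  "MPG_limited Q qI Sig Delta Obs \<longleftrightarrow>
     MPG_partial Q qI Sig Delta Obs \<and> {qI} \<in> Obs \<and>
     (\<forall>ob\<in>Obs. \<forall>a\<in>Sig. \<exists>S. S \<subseteq> Obs \<and> post Delta a ob = \<Union>S)"

definition abstract_path :: "('q \<times> 'a \<times> 'q) set \<Rightarrow> 'q set set \<Rightarrow> (nat \<Rightarrow> 'q set) \<Rightarrow> (nat \<Rightarrow> 'a) \<Rightarrow> bool" where
  "abstract_path Delta Obs obs act \<longleftrightarrow>
     (\<forall>i. obs i \<in> Obs) \<and>
     (\<forall>i. \<exists>q\<in>obs i. \<exists>q'\<in>obs (Suc i). (q, act i, q') \<in> Delta)"

definition is_play :: "'q \<Rightarrow> ('q \<times> 'a \<times> 'q) set \<Rightarrow> 'q set set \<Rightarrow> (nat \<Rightarrow> 'q set) \<Rightarrow> (nat \<Rightarrow> 'a) \<Rightarrow> bool" where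
  "is_play qI Delta Obs obs act \<longleftrightarrow> abstract_path Delta Obs obs act \<and> qI \<in> obs 0"

text \<open>Finite prefixes o_0 a_0 ... o_n of plays, represented as the list of
  observations [o_0,...,o_n] and the list of actions [a_0,...,a_(n-1)].\<close>

definition Prefs :: "'q \<Rightarrow> ('q \<times> 'a \<times> 'q) set \<Rightarrow> 'q set set \<Rightarrow> ('q set list \<times> 'a list) set" where
  "Prefs qI Delta Obs = {(map obs [0..<Suc n], map act [0..<n]) | obs act n.
      is_play qI Delta Obs obs act}"

definition concretisation :: "('q \<times> 'a \<times> 'q) set \<Rightarrow> (nat \<Rightarrow> 'q set) \<Rightarrow> (nat \<Rightarrow> 'a) \<Rightarrow> (nat \<Rightarrow> 'q) \<Rightarrow> bool" where
  "concretisation Delta obs act qs \<longleftrightarrow>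
     (\<forall>i. qs i \<in> obs i) \<and> (\<forall>i. (qs i, act i, qs (Suc i)) \<in> Delta)"

definition path_weight :: "('q \<times> 'a \<times> 'q \<Rightarrow> int) \<Rightarrow> (nat \<Rightarrow> 'q) \<Rightarrow> (nat \<Rightarrow> 'a) \<Rightarrow> nat \<Rightarrow> int" where
  "path_weight w qs act n = (\<Sum>i<n. w (qs i, act i, qs (Suc i)))"

definition lower_MP :: "('q \<times> 'a \<times> 'q \<Rightarrow> int) \<Rightarrow> (nat \<Rightarrow> 'q) \<Rightarrow> (nat \<Rightarrow> 'a) \<Rightarrow> ereal" where
  "lower_MP w qs act = liminf (\<lambda>n. ereal (real_of_int (path_weight w qs act n) / real n))"

definition winning_Eve_play :: "('q \<times> 'a \<times> 'q) set \<Rightarrow> ('q \<times> 'a \<times> 'q \<Rightarrow> int) \<Rightarrow> (nat \<Rightarrow> 'q set) \<Rightarrow> (nat \<Rightarrow> 'a) \<Rightarrow> bool" where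
  "winning_Eve_play Delta w obs act \<longleftrightarrow>
     (\<forall>qs. concretisation Delta obs act qs \<longrightarrow> lower_MP w qs act \<ge> 0)"

definition eve_strategy :: "'q \<Rightarrow> 'a set \<Rightarrow> ('q \<times> 'a \<times> 'q) set \<Rightarrow> 'q set set \<Rightarrow> ('q set list \<Rightarrow> 'a list \<Rightarrow> 'a) \<Rightarrow> bool" where
  "eve_strategy qI Sig Delta Obs lE \<longleftrightarrow>
     (\<forall>(os, as) \<in> Prefs qI Delta Obs. lE os as \<in> Sig)"

definition adam_strategy :: "'q \<Rightarrow> 'a set \<Rightarrow> ('q \<times> 'a \<times> 'q) set \<Rightarrow> 'q set set \<Rightarrow> ('q set list \<Rightarrow> 'a list \<Rightarrow> 'a \<Rightarrow> 'q set) \<Rightarrow> bool" where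
  "adam_strategy qI Sig Delta Obs lA \<longleftrightarrow>
     (\<forall>(os, as) \<in> Prefs qI Delta Obs. \<forall>a\<in>Sig.
        lA os as a \<in> Obs \<and> lA os as a \<inter> post Delta a (last os) \<noteq> {})"

definition consistent_Eve :: "('q set list \<Rightarrow> 'a list \<Rightarrow> 'a) \<Rightarrow> (nat \<Rightarrow> 'q set) \<Rightarrow> (nat \<Rightarrow> 'a) \<Rightarrow> bool" where
  "consistent_Eve lE obs act \<longleftrightarrow>
     (\<forall>i. act i = lE (map obs [0..<Suc i]) (map act [0..<i]))"

definition consistent_Adam :: "('q set list \<Rightarrow> 'a list \<Rightarrow> 'a \<Rightarrow> 'q set) \<Rightarrow> (nat \<Rightarrow> 'q set) \<Rightarrow> (nat \<Rightarrow> 'a) \<Rightarrow> bool" where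
  "consistent_Adam lA obs act \<longleftrightarrow>
     (\<forall>i. lA (map obs [0..<Suc i]) (map act [0..<i]) (act i) = obs (Suc i))"

definition eve_wins :: "'q \<Rightarrow> 'a set \<Rightarrow> ('q \<times> 'a \<times> 'q) set \<Rightarrow> ('q \<times> 'a \<times> 'q \<Rightarrow> int) \<Rightarrow> 'q set set \<Rightarrow> bool" where
  "eve_wins qI Sig Delta w Obs \<longleftrightarrow>
     (\<exists>lE. eve_strategy qI Sig Delta Obs lE \<and>
        (\<forall>obs act. is_play qI Delta Obs obs act \<and> consistent_Eve lE obs act \<longrightarrow>
           winning_Eve_play Delta w obs act))"

definition adam_wins :: "'q \<Rightarrow> 'a set \<Rightarrow> ('q \<times> 'a \<times> 'q) set \<Rightarrow> ('q \<times> 'a \<times> 'q \<Rightarrow> int) \<Rightarrow> 'q set set \<Rightarrow> bool" where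
  "adam_wins qI Sig Delta w Obs \<longleftrightarrow>
     (\<exists>lA. adam_strategy qI Sig Delta Obs lA \<and>
        (\<forall>obs act. is_play qI Delta Obs obs act \<and> consistent_Adam lA obs act \<longrightarrow>
           \<not> winning_Eve_play Delta w obs act))"

end

theory Submission
  imports Defs
begin


definition ltK :: "'u set \<Rightarrow> 'u \<Rightarrow> 'u \<Rightarrow> bool" where
  "ltK K a b \<longleftrightarrow> (a, b) \<in> (card_of K) \<and> a \<noteq> b"

definition segK :: "'u set \<Rightarrow> 'u \<Rightarrow> 'u set" where "segK K a = {b. ltK K b a}"

locale kc =
  fixes K :: "'u set" and U :: "'u set set"
  assumes unc: "uncountable K"
    and uf: "ultrafilter_on K U"
    and nonpr: "\<forall>x\<in>K. {x} \<notin> U"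
    and compl: "\<forall>F. F \<subseteq> U \<and> F \<noteq> {} \<and> F \<prec> K \<longrightarrow> \<Inter>F \<in> U"
begin

abbreviation lt where "lt \<equiv> ltK K"
abbreviation seg where "seg \<equiv> segK K"
lemmas lt_def = ltK_def[of K]
lemmas seg_def = segK_def[of K]

lemma WO: "well_order_on K (card_of K)"
  by (rule card_of_well_order_on)

lemma lt_K: "lt a b \<Longrightarrow> a \<in> K \<and> b \<in> K"
  using WO unfolding lt_def
  by (metis FieldI1 FieldI2 Field_card_of)

lemma lt_irrefl: "\<not> lt a a" by (simp add: lt_def)

lemma lt_trans: "lt a b \<Longrightarrow> lt b c \<Longrightarrow> lt a c"
  using WO unfolding lt_def well_order_on_def linear_order_on_def partial_order_on_def
    preorder_on_def antisym_def trans_def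
  by blast

lemma lt_total: "a \<in> K \<Longrightarrow> b \<in> K \<Longrightarrow> a = b \<or> lt a b \<or> lt b a"
  using WO unfolding lt_def well_order_on_def linear_order_on_def total_on_def
  by blast

lemma lt_wf: "wf {(a, b). lt a b}"
proof -
  have "wf ( (card_of K) - Id)" using WO unfolding well_order_on_def by blast
  moreover have "{(a, b). lt a b} = (card_of K) - Id" unfolding lt_def by auto
  ultimately show ?thesis by simp
qed

lemma lt_asym: "lt a b \<Longrightarrow> \<not> lt b a"
  using lt_trans lt_irrefl by blast


lemma seg_underS: "seg a = underS (card_of K) a"
  unfolding seg_def underS_def lt_def by auto

lemma seg_lesspoll: assumes "a \<in> K" shows "seg a \<prec> K"
proof -
  have "(card_of (underS (card_of K) a), card_of K) \<in> ordLess"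
    using card_of_underS[OF card_of_Card_order] assms by (simp add: Field_card_of)
  hence 1: "\<not>(\<exists>f. inj_on f K \<and> f ` K \<subseteq> underS (card_of K) a)" using card_of_ordLess by blast
  have 2: "underS (card_of K) a \<subseteq> K"
    using Field_card_of[of K] underS_Field[of _ "card_of K" a] by blast
  show ?thesis unfolding lesspoll_def seg_underS
  proof
    show "underS (card_of K) a \<lesssim> K" using 2 by (rule subset_imp_lepoll)
    show "\<not> underS (card_of K) a \<approx> K"
    proof
      assume "underS (card_of K) a \<approx> K"
      then obtain f where "bij_betw f K (underS (card_of K) a)"
        by (meson eqpoll_def eqpoll_sym)
      thus False using 1 by (metis bij_betw_def order_refl)
    qed
  qed
qed

lemma countable_lesspoll_K: "countable S \<Longrightarrow> S \<prec> K"
proof -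
  assume c: "countable S"
  have "S \<lesssim> K"
  proof -
    have "infinite K" using unc by (metis countable_finite)
    hence "(UNIV::nat set) \<lesssim> K" using infinite_le_lepoll by blast
    moreover have "S \<lesssim> (UNIV::nat set)" using c
      by (metis countable_def lepoll_def' Pi_I UNIV_I)
    ultimately show ?thesis using lepoll_trans by blast
  qed
  moreover have "\<not> S \<approx> K"
  proof
    assume "S \<approx> K"
    hence "K \<lesssim> S" by (simp add: eqpoll_imp_lepoll eqpoll_sym)
    thus False using c unc countable_lepoll by blast
  qed
  ultimately show ?thesis by (simp add: lesspoll_def)
qed

lemmas ufd = uf[unfolded ultrafilter_on_def]
lemma U_sub: "A \<in> U \<Longrightarrow> A \<subseteq> K" using ufd[THEN conjunct1] by auto
lemma U_K: "K \<in> U" using ufd by (elim conjE)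
lemma U_empty: "{} \<notin> U" using ufd by (elim conjE)
lemma U_int: "A \<in> U \<Longrightarrow> B \<in> U \<Longrightarrow> A \<inter> B \<in> U"
  using ufd by (elim conjE) (erule allE[of _ A], erule allE[of _ B], simp)
lemma U_mono: "A \<in> U \<Longrightarrow> A \<subseteq> B \<Longrightarrow> B \<subseteq> K \<Longrightarrow> B \<in> U"
  using ufd by (elim conjE) (erule allE[of _ A], erule allE[of _ B], simp)
lemma U_ultra: "A \<subseteq> K \<Longrightarrow> A \<in> U \<or> K - A \<in> U"
  using ufd by (elim conjE) (erule allE[of _ A], simp)
lemma U_ne: "A \<in> U \<Longrightarrow> \<exists>x. x \<in> A" using U_empty by (metis ex_in_conv)

lemma U_small: assumes "S \<subseteq> K" "S \<prec> K" shows "S \<notin> U"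
proof
  assume SU: "S \<in> U"
  hence Sne: "S \<noteq> {}" using U_empty by auto
  let ?F = "(\<lambda>x. K - {x}) ` S"
  have FU: "?F \<subseteq> U"
  proof
    fix A assume "A \<in> ?F"
    then obtain x where x: "x \<in> S" "A = K - {x}" by auto
    have xK: "x \<in> K" using x(1) assms(1) by auto
    have "{x} \<notin> U" using nonpr xK by auto
    moreover have "{x} \<subseteq> K" using xK by auto
    ultimately show "A \<in> U" using U_ultra[of "{x}"] x(2) by auto
  qed
  have Fne: "?F \<noteq> {}" using Sne by auto
  have Fl: "?F \<prec> K" by (rule lesspoll_trans1[OF image_lepoll assms(2)])
  have "\<Inter>?F \<in> U" by (rule compl[rule_format, OF conjI[OF FU conjI[OF Fne Fl]]])
  moreover have "\<Inter>?F = K - S" using Sne by auto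
  ultimately have KS: "K - S \<in> U" by simp
  have "S \<inter> (K - S) = {}" by auto
  thus False using U_int[OF SU KS] U_empty by simp
qed

lemma U_countable_Inter:
  assumes "countable F" "F \<subseteq> U" "F \<noteq> {}" shows "\<Inter>F \<in> U"
  by (rule compl[rule_format, OF conjI[OF assms(2) conjI[OF assms(3) countable_lesspoll_K[OF assms(1)]]]])

lemma seg_sub: "seg a \<subseteq> K" unfolding seg_def using lt_K by auto

lemma seg_notin_U: "a \<in> K \<Longrightarrow> seg a \<notin> U"
  by (rule U_small[OF seg_sub seg_lesspoll])


lemma U_union: assumes "A \<subseteq> K" "B \<subseteq> K" "A \<notin> U" "B \<notin> U" shows "A \<union> B \<notin> U"
proof
  assume AB: "A \<union> B \<in> U"
  have "K - A \<in> U" using U_ultra[OF assms(1)] assms(3) by auto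
  moreover have "K - B \<in> U" using U_ultra[OF assms(2)] assms(4) by auto
  ultimately have "(K - A) \<inter> (K - B) \<in> U" by (rule U_int)
  hence "(A \<union> B) \<inter> ((K - A) \<inter> (K - B)) \<in> U" by (rule U_int[OF AB])
  moreover have "(A \<union> B) \<inter> ((K - A) \<inter> (K - B)) = {}" by auto
  ultimately show False using U_empty by simp
qed

lemma under_notin_U: assumes "a \<in> K" shows "seg a \<union> {a} \<notin> U"
proof -
  have "{a} \<notin> U" using nonpr assms by auto
  thus ?thesis using U_union[OF seg_sub _ seg_notin_U[OF assms], of "{a}"] assms by blast
qed

lemma above_in_U: assumes "a \<in> K" shows "{b\<in>K. lt a b} \<in> U"
proof -
  have "K - (seg a \<union> {a}) \<in> U" using U_ultra[of "seg a \<union> {a}"] under_notin_U[OF assms]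
      seg_sub assms by auto
  moreover have "K - (seg a \<union> {a}) \<subseteq> {b\<in>K. lt a b}"
    using lt_total[OF assms] unfolding seg_def by auto
  ultimately show ?thesis using U_mono[of "K - (seg a \<union> {a})" "{b\<in>K. lt a b}"] by simp
qed

lemma exists_above: "a \<in> K \<Longrightarrow> \<exists>b\<in>K. lt a b"
  using U_ne[OF above_in_U] by auto

lemma U_finite_partition:
  assumes "finite C" "B \<in> U" "\<forall>x\<in>B. g x \<in> C"
  shows "\<exists>c\<in>C. {x\<in>B. g x = c} \<in> U"
  using assms
proof (induction C arbitrary: B rule: finite_induct)
  case empty
  then show ?case using U_ne by auto
next
  case (insert c C)
  show ?case
  proof (cases "{x\<in>B. g x = c} \<in> U")
    case True then show ?thesis by auto
  next
    case False
    have Bsub: "B \<subseteq> K" using U_sub insert.prems(1) by auto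
    have "K - {x\<in>B. g x = c} \<in> U" using U_ultra[of "{x\<in>B. g x = c}"] False Bsub by auto
    hence "B \<inter> (K - {x\<in>B. g x = c}) \<in> U" by (rule U_int[OF insert.prems(1)])
    moreover have "B \<inter> (K - {x\<in>B. g x = c}) = {x\<in>B. g x \<noteq> c}" using Bsub by auto
    ultimately have B': "{x\<in>B. g x \<noteq> c} \<in> U" by simp
    have "\<forall>x\<in>{x\<in>B. g x \<noteq> c}. g x \<in> C" using insert.prems(2) by auto
    then obtain c' where "c' \<in> C" "{x\<in>{x\<in>B. g x \<noteq> c}. g x = c'} \<in> U"
      using insert.IH[OF B'] by blast
    moreover have "{x\<in>{x\<in>B. g x \<noteq> c}. g x = c'} \<subseteq> {x\<in>B. g x = c'}" by auto
    moreover have "{x\<in>B. g x = c'} \<subseteq> K" using Bsub by auto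
    ultimately show ?thesis using U_mono[of "{x\<in>{x\<in>B. g x \<noteq> c}. g x = c'}" "{x\<in>B. g x = c'}"] \<open>c' \<in> C\<close> by auto
  qed
qed


definition Rel :: "(('u \<Rightarrow> 'u) \<times> ('u \<Rightarrow> 'u)) set" where
  "Rel = {(g, f). g \<in> K \<rightarrow> K \<and> f \<in> K \<rightarrow> K \<and> {x\<in>K. lt (g x) (f x)} \<in> U}"

lemma Rel_wf: "wf Rel"
proof -
  have "\<nexists>F. \<forall>i. (F (Suc i), F i) \<in> Rel"
  proof
    assume "\<exists>F. \<forall>i. (F (Suc i), F i) \<in> Rel"
    then obtain F where F: "\<forall>i. (F (Suc i), F i) \<in> Rel" by blast
    define A where "A i = {x\<in>K. lt (F (Suc i) x) (F i x)}" for i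
    have "\<forall>i. A i \<in> U" using F unfolding A_def Rel_def by auto
    hence "range A \<subseteq> U" by auto
    hence "\<Inter>(range A) \<in> U" using U_countable_Inter[of "range A"] by auto
    then obtain x where x: "x \<in> \<Inter>(range A)" using U_ne by blast
    have "\<forall>i. ((\<lambda>i. F i x) (Suc i), (\<lambda>i. F i x) i) \<in> {(a, b). lt a b}"
      using x unfolding A_def by auto
    thus False using lt_wf unfolding wf_iff_no_infinite_down_chain by auto
  qed
  thus ?thesis unfolding wf_iff_no_infinite_down_chain .
qed

definition unb :: "('u \<Rightarrow> 'u) \<Rightarrow> bool" where
  "unb f \<longleftrightarrow> f \<in> K \<rightarrow> K \<and> (\<forall>a\<in>K. {x\<in>K. lt (f x) a} \<notin> U)"

lemma unb_id: "unb id"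
proof -
  have "\<And>a. a \<in> K \<Longrightarrow> {x\<in>K. lt x a} = seg a" unfolding seg_def using lt_K by auto
  thus ?thesis unfolding unb_def using seg_notin_U by auto
qed

definition fm :: "'u \<Rightarrow> 'u" where
  "fm = (SOME f. unb f \<and> (\<forall>g. (g, f) \<in> Rel \<longrightarrow> \<not> unb g))"

lemma fm_prop: "unb fm \<and> (\<forall>g. (g, fm) \<in> Rel \<longrightarrow> \<not> unb g)"
proof -
  obtain z where "z \<in> {f. unb f}" "\<And>y. (y, z) \<in> Rel \<Longrightarrow> y \<notin> {f. unb f}"
    using wfE_min[OF Rel_wf, of id "{f. unb f}"] unb_id by blast
  hence "\<exists>f. unb f \<and> (\<forall>g. (g, f) \<in> Rel \<longrightarrow> \<not> unb g)" by auto
  thus ?thesis unfolding fm_def by (rule someI_ex)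
qed

lemma fm_K: "x \<in> K \<Longrightarrow> fm x \<in> K" using fm_prop unfolding unb_def by auto

definition D :: "'u set set" where "D = {A. A \<subseteq> K \<and> {x\<in>K. fm x \<in> A} \<in> U}"

lemma D_uf: "ultrafilter_on K D"
  unfolding ultrafilter_on_def
proof (intro conjI allI impI)
  show "D \<subseteq> Pow K" unfolding D_def by auto
  have "{x\<in>K. fm x \<in> K} = K" using fm_K by auto
  thus "K \<in> D" unfolding D_def using U_K by auto
  show "{} \<notin> D" unfolding D_def using U_empty by auto
next
  fix A B assume "A \<in> D \<and> B \<in> D"
  hence "{x\<in>K. fm x \<in> A} \<inter> {x\<in>K. fm x \<in> B} \<in> U" "A \<subseteq> K" unfolding D_def using U_int by auto
  moreover have "{x\<in>K. fm x \<in> A} \<inter> {x\<in>K. fm x \<in> B} = {x\<in>K. fm x \<in> A \<inter> B}" by auto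
  ultimately show "A \<inter> B \<in> D" unfolding D_def by auto
next
  fix A B assume "A \<in> D \<and> A \<subseteq> B \<and> B \<subseteq> K"
  moreover have "A \<subseteq> B \<Longrightarrow> {x\<in>K. fm x \<in> A} \<subseteq> {x\<in>K. fm x \<in> B}" by auto
  ultimately show "B \<in> D" unfolding D_def using U_mono[of "{x\<in>K. fm x \<in> A}" "{x\<in>K. fm x \<in> B}"] by auto
next
  fix A assume A: "A \<subseteq> K"
  have "{x\<in>K. fm x \<in> A} \<in> U \<or> K - {x\<in>K. fm x \<in> A} \<in> U" using U_ultra by auto
  moreover have "K - {x\<in>K. fm x \<in> A} = {x\<in>K. fm x \<in> K - A}" using fm_K by auto
  ultimately show "A \<in> D \<or> K - A \<in> D" unfolding D_def using A by auto
qed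

lemma D_nonpr: "\<forall>x\<in>K. {x} \<notin> D"
proof (intro ballI notI)
  fix a assume aK: "a \<in> K" and "{a} \<in> D"
  hence P: "{x\<in>K. fm x = a} \<in> U" unfolding D_def by auto
  obtain b where b: "b \<in> K" "lt a b" using exists_above[OF aK] by auto
  have "{x\<in>K. fm x = a} \<subseteq> {x\<in>K. lt (fm x) b}" using b by auto
  hence "{x\<in>K. lt (fm x) b} \<in> U" using U_mono[OF P] by auto
  thus False using fm_prop b unfolding unb_def by auto
qed

lemma D_compl: "\<forall>F. F \<subseteq> D \<and> F \<noteq> {} \<and> F \<prec> K \<longrightarrow> \<Inter>F \<in> D"
proof (intro allI impI)
  fix F assume F: "F \<subseteq> D \<and> F \<noteq> {} \<and> F \<prec> K"
  let ?F = "(\<lambda>A. {x\<in>K. fm x \<in> A}) ` F"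
  have 1: "?F \<subseteq> U" using F unfolding D_def by auto
  have 2: "?F \<noteq> {}" using F by auto
  have 3: "?F \<prec> K" using F lesspoll_trans1[OF image_lepoll] by blast
  have "\<Inter>?F \<in> U" by (rule compl[rule_format, OF conjI[OF 1 conjI[OF 2 3]]])
  moreover have "\<Inter>?F = {x\<in>K. fm x \<in> \<Inter>F}" using F by auto
  moreover have "\<Inter>F \<subseteq> K" using F unfolding D_def by auto
  ultimately show "\<Inter>F \<in> D" unfolding D_def by auto
qed

lemma D_kc: "kc K D"
  using unc D_uf D_nonpr D_compl by (simp add: kc_def)

lemma D_normal:
  assumes A: "A \<in> D" and g: "\<forall>y\<in>A. lt (g y) y"
  shows "\<exists>a\<in>K. {y\<in>K. g y = a} \<in> D"
proof -
  define g' where "g' x = (if fm x \<in> A then g (fm x) else fm x)" for x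
  have AK: "A \<subseteq> K" using A unfolding D_def by auto
  have g'K: "g' \<in> K \<rightarrow> K" unfolding g'_def using fm_K g lt_K AK by (auto simp: Pi_iff)
  have "{x\<in>K. fm x \<in> A} \<subseteq> {x\<in>K. lt (g' x) (fm x)}" unfolding g'_def using g by auto
  hence "{x\<in>K. lt (g' x) (fm x)} \<in> U" using A unfolding D_def using U_mono by blast
  hence "(g', fm) \<in> Rel" unfolding Rel_def using g'K fm_prop unfolding unb_def by auto
  hence "\<not> unb g'" using fm_prop by auto
  then obtain a where a: "a \<in> K" "{x\<in>K. lt (g' x) a} \<in> U" using g'K unfolding unb_def by auto
  let ?B = "{y\<in>A. lt (g y) a}"
  have "{x\<in>K. lt (g' x) a} \<inter> {x\<in>K. fm x \<in> A} \<in> U" using a(2) A U_int unfolding D_def by auto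
  moreover have "{x\<in>K. lt (g' x) a} \<inter> {x\<in>K. fm x \<in> A} = {x\<in>K. fm x \<in> ?B}"
    unfolding g'_def by auto
  ultimately have BD: "?B \<in> D" unfolding D_def using AK by auto
  show ?thesis
  proof (rule ccontr)
    assume nc: "\<not> (\<exists>a\<in>K. {y\<in>K. g y = a} \<in> D)"
    interpret Dk: kc K D by (rule D_kc)
    let ?F = "(\<lambda>b. K - {y\<in>K. g y = b}) ` seg a"
    have segne: "seg a \<noteq> {}"
    proof
      assume "seg a = {}"
      moreover obtain y where "y \<in> ?B" using Dk.U_ne[OF BD] by auto
      moreover have "g y \<in> K" using lt_K \<open>y \<in> ?B\<close> by auto
      ultimately show False unfolding seg_def by auto
    qed
    have 1: "?F \<subseteq> D"
    proof
      fix X assume "X \<in> ?F"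
      then obtain b where b: "b \<in> seg a" "X = K - {y\<in>K. g y = b}" by auto
      have "b \<in> K" using b(1) seg_sub by auto
      hence "{y\<in>K. g y = b} \<notin> D" using nc by auto
      thus "X \<in> D" using Dk.U_ultra[of "{y\<in>K. g y = b}"] b(2) by auto
    qed
    have 2: "?F \<noteq> {}" using segne by auto
    have 3: "?F \<prec> K" using lesspoll_trans1[OF image_lepoll seg_lesspoll[OF a(1)]] .
    have "\<Inter>?F \<in> D" by (rule D_compl[rule_format, OF conjI[OF 1 conjI[OF 2 3]]])
    hence "\<Inter>?F \<inter> ?B \<in> D" using BD Dk.U_int by blast
    then obtain y where y: "y \<in> \<Inter>?F" "y \<in> ?B" using Dk.U_ne by blast
    have "g y \<in> seg a" using y(2) unfolding seg_def by auto
    moreover have "y \<in> K" using y(2) AK by auto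
    ultimately show False using y(1) segne by auto
  qed
qed


lemma D_normal': "\<forall>A g. A \<in> D \<and> (\<forall>y\<in>A. lt (g y) y) \<longrightarrow> (\<exists>a\<in>K. {y\<in>K. g y = a} \<in> D)"
  using D_normal by blast

lemma embed:
  fixes N :: "'b set" and R :: "('b \<times> 'b) set"
  assumes H: "H \<in> U" and N: "countable N" and R: "wf R" "R \<subseteq> N \<times> N"
  shows "\<exists>h. (\<forall>x. h x \<in> H) \<and> (\<forall>x y. (x, y) \<in> R \<longrightarrow> lt (h x) (h y))"
proof -
  define F where "F f x = (SOME b. b \<in> H \<and> (\<forall>y. (y, x) \<in> R \<longrightarrow> lt (f y) b))" for f :: "'b \<Rightarrow> 'u" and x :: 'b
  define h where "h = wfrec R F"
  have hx: "h x = (SOME b. b \<in> H \<and> (\<forall>y. (y, x) \<in> R \<longrightarrow> lt (h y) b))" for x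
  proof -
    have "h x = F (cut h R x) x" unfolding h_def by (rule wfrec[OF R(1)])
    also have "\<dots> = (SOME b. b \<in> H \<and> (\<forall>y. (y, x) \<in> R \<longrightarrow> lt (h y) b))"
      unfolding F_def by (rule arg_cong[where f=Eps]) (auto simp: cut_apply fun_eq_iff)
    finally show ?thesis .
  qed
  have HK: "H \<subseteq> K" using U_sub H by auto
  have main: "h x \<in> H \<and> (\<forall>y. (y, x) \<in> R \<longrightarrow> lt (h y) (h x))" for x
  proof (induction x rule: wf_induct_rule[OF R(1)])
    case (1 x)
    let ?P = "{y. (y, x) \<in> R}"
    have "?P \<subseteq> N" using R(2) by auto
    hence Pc: "countable ?P" using countable_subset[OF _ N] by blast
    let ?F = "insert H ((\<lambda>y. {b\<in>K. lt (h y) b}) ` ?P)"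
    have Fc: "countable ?F" using Pc by auto
    have FU: "?F \<subseteq> U"
    proof
      fix X assume "X \<in> ?F"
      then consider "X = H" | y where "(y, x) \<in> R" "X = {b\<in>K. lt (h y) b}" by auto
      then show "X \<in> U"
      proof cases
        case 1 then show ?thesis using H by simp
      next
        case 2
        have "h y \<in> K" using "1.IH"[OF 2(1)] HK by auto
        then show ?thesis using above_in_U 2(2) by simp
      qed
    qed
    have "\<Inter>?F \<in> U" by (rule U_countable_Inter[OF Fc FU]) simp
    then obtain b where b: "b \<in> \<Inter>?F" using U_ne by blast
    hence ex: "b \<in> H \<and> (\<forall>y. (y, x) \<in> R \<longrightarrow> lt (h y) b)" by auto
    show ?case unfolding hx[of x] by (rule someI[of _ b], rule ex)
  qed
  show ?thesis using main by blast
qed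

end

locale nkc = kc +
  assumes normal: "\<forall>A g. A \<in> U \<and> (\<forall>y\<in>A. lt (g y) y) \<longrightarrow> (\<exists>a\<in>K. {y\<in>K. g y = a} \<in> U)"
begin

lemma diag:
  assumes Hs: "\<forall>a\<in>K. Hs a \<in> U"
  shows "{b\<in>K. \<forall>a. lt a b \<longrightarrow> b \<in> Hs a} \<in> U"
proof (rule ccontr)
  let ?Dl = "{b\<in>K. \<forall>a. lt a b \<longrightarrow> b \<in> Hs a}"
  assume nd: "?Dl \<notin> U"
  let ?C = "K - ?Dl"
  have CU: "?C \<in> U" using U_ultra[of ?Dl] nd by auto
  define g where "g b = (SOME a. lt a b \<and> b \<notin> Hs a)" for b
  have gC: "lt (g b) b \<and> b \<notin> Hs (g b)" if "b \<in> ?C" for b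
  proof -
    have "\<exists>a. lt a b \<and> b \<notin> Hs a" using that by auto
    thus ?thesis unfolding g_def by (rule someI_ex)
  qed
  have "\<forall>y\<in>?C. lt (g y) y" using gC by simp
  from normal[rule_format, OF conjI[OF CU this]] obtain a where a: "a \<in> K" "{y\<in>K. g y = a} \<in> U"
    by blast
  have "{y\<in>K. g y = a} \<inter> ?C \<in> U" using U_int[OF a(2) CU] .
  moreover have "Hs a \<in> U" using Hs a(1) by simp
  ultimately have "({y\<in>K. g y = a} \<inter> ?C) \<inter> Hs a \<in> U" by (rule U_int)
  then obtain y where y: "y \<in> ({y\<in>K. g y = a} \<inter> ?C) \<inter> Hs a" using U_ne by blast
  hence "y \<in> ?C" by simp
  hence "y \<notin> Hs (g y)" using gC by simp
  moreover have "g y = a" "y \<in> Hs a" using y by auto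
  ultimately show False by simp
qed

lemma rowbottom:
  assumes C: "finite C" and c: "\<forall>xs. c xs \<in> C"
  shows "\<exists>H\<in>U. \<exists>col\<in>C. \<forall>xs. length xs = n \<and> sorted_wrt lt xs \<and> set xs \<subseteq> H \<longrightarrow> c xs = col"
  using c
proof (induction n arbitrary: c)
  case 0
  show ?case using U_K 0 by (intro bexI[of _ K] bexI[of _ "c []"]) auto
next
  case (Suc n)
  define P where "P a p \<longleftrightarrow> fst p \<in> U \<and> snd p \<in> C \<and>
     (\<forall>xs. length xs = n \<and> sorted_wrt lt xs \<and> set xs \<subseteq> fst p \<longrightarrow> c (a # xs) = snd p)" for a p
  have exP: "\<exists>p. P a p" for a
  proof -
    have "\<forall>xs. c (a # xs) \<in> C" using Suc.prems by auto
    from Suc.IH[OF this] obtain H col where "H \<in> U" "col \<in> C"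
      "\<forall>xs. length xs = n \<and> sorted_wrt lt xs \<and> set xs \<subseteq> H \<longrightarrow> c (a # xs) = col" by blast
    thus ?thesis unfolding P_def by (intro exI[of _ "(H, col)"]) auto
  qed
  define HH where "HH a = fst (SOME p. P a p)" for a
  define CC where "CC a = snd (SOME p. P a p)" for a
  have PP: "P a (HH a, CC a)" for a unfolding HH_def CC_def using someI_ex[OF exP[of a]] by simp
  have "\<forall>x\<in>K. CC x \<in> C" using PP unfolding P_def by auto
  then obtain col where col: "col \<in> C" "{x\<in>K. CC x = col} \<in> U"
    using U_finite_partition[OF C U_K] by blast
  have "\<forall>a\<in>K. HH a \<in> U" using PP unfolding P_def by auto
  hence Dl: "{b\<in>K. \<forall>a. lt a b \<longrightarrow> b \<in> HH a} \<in> U" by (rule diag)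
  let ?H = "{x\<in>K. CC x = col} \<inter> {b\<in>K. \<forall>a. lt a b \<longrightarrow> b \<in> HH a}"
  have HU: "?H \<in> U" using U_int[OF col(2) Dl] .
  show ?case
  proof (intro bexI[OF _ HU] bexI[OF _ col(1)] allI impI)
    fix xs assume xs: "length xs = Suc n \<and> sorted_wrt lt xs \<and> set xs \<subseteq> ?H"
    then obtain a ys where xs_eq: "xs = a # ys" by (cases xs) auto
    have a: "CC a = col" using xs xs_eq by auto
    have "set ys \<subseteq> HH a" using xs xs_eq by auto
    moreover have "length ys = n" "sorted_wrt lt ys" using xs xs_eq by auto
    ultimately have "c (a # ys) = CC a" using PP[of a] unfolding P_def by auto
    thus "c xs = col" using a xs_eq by simp
  qed
qed

lemma rowbottom_countable:
  assumes I: "countable I" and C: "\<forall>i\<in>I. finite (C i) \<and> (\<forall>xs. c i xs \<in> C i)"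
  shows "\<exists>H\<in>U. \<forall>i\<in>I. \<forall>n. \<exists>col. \<forall>xs. length xs = n \<and> sorted_wrt lt xs \<and> set xs \<subseteq> H \<longrightarrow> c i xs = col"
proof -
  define P where "P i n H \<longleftrightarrow> H \<in> U \<and> (\<exists>col. \<forall>xs. length xs = n \<and> sorted_wrt lt xs \<and> set xs \<subseteq> H \<longrightarrow> c i xs = col)" for i n H
  have exP: "i \<in> I \<Longrightarrow> \<exists>H. P i n H" for i n
  proof -
    assume i: "i \<in> I"
    have "finite (C i)" "\<forall>xs. c i xs \<in> C i" using C i by auto
    from rowbottom[OF this, of n] obtain H col where "H \<in> U" "\<forall>xs. length xs = n \<and> sorted_wrt lt xs \<and> set xs \<subseteq> H \<longrightarrow> c i xs = col"
      by blast
    thus ?thesis unfolding P_def by blast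
  qed
  define HH where "HH p = (SOME H. P (fst p) (snd p) H)" for p
  have PP: "p \<in> I \<times> UNIV \<Longrightarrow> P (fst p) (snd p) (HH p)" for p
  proof -
    assume "p \<in> I \<times> UNIV"
    hence "fst p \<in> I" by auto
    from exP[OF this, of "snd p"] show ?thesis unfolding HH_def by (rule someI_ex)
  qed
  let ?F = "insert K (HH ` (I \<times> UNIV))"
  have "countable (I \<times> (UNIV::nat set))" using I by simp
  hence "countable (HH ` (I \<times> (UNIV::nat set)))" by (rule countable_image)
  hence Fc: "countable ?F" by simp
  have FU: "?F \<subseteq> U"
  proof
    fix X assume "X \<in> ?F"
    then consider "X = K" | p where "p \<in> I \<times> UNIV" "X = HH p" by auto
    then show "X \<in> U"
    proof cases
      case 1 then show ?thesis using U_K by simp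
    next
      case 2 then show ?thesis using PP[OF 2(1)] unfolding P_def by simp
    qed
  qed
  have FI: "\<Inter>?F \<in> U" by (rule U_countable_Inter[OF Fc FU]) simp
  have "\<forall>i\<in>I. \<forall>n. \<exists>col. \<forall>xs. length xs = n \<and> sorted_wrt lt xs \<and> set xs \<subseteq> \<Inter>?F \<longrightarrow> c i xs = col"
  proof (intro ballI allI)
    fix i n assume i: "i \<in> I"
    have "P i n (HH (i, n))" using PP[of "(i, n)"] i by simp
    then obtain col where col: "\<forall>xs. length xs = n \<and> sorted_wrt lt xs \<and> set xs \<subseteq> HH (i, n) \<longrightarrow> c i xs = col"
      unfolding P_def by (elim conjE exE)
    have "(i, n) \<in> I \<times> (UNIV::nat set)" using i by simp
    hence "HH (i, n) \<in> ?F" by (intro insertI2 imageI)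
    hence sub: "\<Inter>?F \<subseteq> HH (i, n)" by (rule Inter_lower)
    show "\<exists>col. \<forall>xs. length xs = n \<and> sorted_wrt lt xs \<and> set xs \<subseteq> \<Inter>?F \<longrightarrow> c i xs = col"
    proof (intro exI allI impI)
      fix xs assume xs: "length xs = n \<and> sorted_wrt lt xs \<and> set xs \<subseteq> \<Inter>?F"
      hence "set xs \<subseteq> HH (i, n)" using sub by (meson subset_trans)
      thus "c i xs = col" using col xs by simp
    qed
  qed
  thus ?thesis using FI by (rule bexI)
qed

end

lemma (in kc) D_nkc: "nkc K D"
  unfolding nkc_def nkc_axioms_def by (intro conjI D_kc D_normal')



primrec run :: "(('e \<times> 'd) list \<Rightarrow> 'e) \<Rightarrow> (('e \<times> 'd) list \<Rightarrow> 'e \<Rightarrow> 'd) \<Rightarrow> ('e \<times> 'd) list \<Rightarrow> nat \<Rightarrow> ('e \<times> 'd) list" where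
  "run \<sigma> \<tau> h 0 = h"
| "run \<sigma> \<tau> h (Suc n) = run \<sigma> \<tau> h n @ [(\<sigma> (run \<sigma> \<tau> h n), \<tau> (run \<sigma> \<tau> h n) (\<sigma> (run \<sigma> \<tau> h n)))]"

definition adam_from :: "(('e \<times> 'd) list \<Rightarrow> 'e \<Rightarrow> bool) \<Rightarrow> ('e \<times> 'd) list \<Rightarrow> (('e \<times> 'd) list \<Rightarrow> 'e \<Rightarrow> 'd) \<Rightarrow> bool" where
  "adam_from lost h \<tau> \<longleftrightarrow> (\<forall>\<sigma>. \<exists>n. lost (run \<sigma> \<tau> h n) (\<sigma> (run \<sigma> \<tau> h n)))"

definition eve_from :: "(('e \<times> 'd) list \<Rightarrow> 'e \<Rightarrow> bool) \<Rightarrow> ('e \<times> 'd) list \<Rightarrow> (('e \<times> 'd) list \<Rightarrow> 'e) \<Rightarrow> bool" where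
  "eve_from lost h \<sigma> \<longleftrightarrow> (\<forall>\<tau> n. \<not> lost (run \<sigma> \<tau> h n) (\<sigma> (run \<sigma> \<tau> h n)))"

lemma run_prefix: "\<exists>ys. run \<sigma> \<tau> h n = h @ ys \<and> length ys = n"
  by (induction n) auto

lemma GS_step:
  fixes lost :: "('e \<times> 'd) list \<Rightarrow> 'e \<Rightarrow> bool"
  assumes good: "\<not> (\<exists>\<tau>. adam_from lost h \<tau>)"
  shows "\<exists>e. \<not> lost h e \<and> (\<forall>d. \<not> (\<exists>\<tau>. adam_from lost (h @ [(e, d)]) \<tau>))"
proof (rule ccontr)
  assume "\<not> ?thesis"
  hence A: "\<forall>e. \<not> lost h e \<longrightarrow> (\<exists>d \<tau>. adam_from lost (h @ [(e, d)]) \<tau>)" by blast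
  define dd where "dd e = (SOME d. \<exists>\<tau>. adam_from lost (h @ [(e, d)]) \<tau>)" for e
  define TT where "TT e = (SOME \<tau>. adam_from lost (h @ [(e, dd e)]) \<tau>)" for e
  have TT: "adam_from lost (h @ [(e, dd e)]) (TT e)" if "\<not> lost h e" for e
  proof -
    have "\<exists>d \<tau>. adam_from lost (h @ [(e, d)]) \<tau>" using A that by blast
    hence "\<exists>\<tau>. adam_from lost (h @ [(e, dd e)]) \<tau>" unfolding dd_def by (rule someI_ex)
    thus ?thesis unfolding TT_def by (rule someI_ex)
  qed
  define \<tau>' where "\<tau>' h' e' = (if h' = h then dd e' else TT (fst (h' ! length h)) h' e')" for h' e'
  have "adam_from lost h \<tau>'"
    unfolding adam_from_def
  proof
    fix \<sigma> :: "('e \<times> 'd) list \<Rightarrow> 'e"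
    let ?e = "\<sigma> h"
    show "\<exists>n. lost (run \<sigma> \<tau>' h n) (\<sigma> (run \<sigma> \<tau>' h n))"
    proof (cases "lost h ?e")
      case True
      then show ?thesis by (intro exI[of _ 0]) simp
    next
      case False
      let ?h1 = "h @ [(?e, dd ?e)]"
      have eq: "run \<sigma> \<tau>' h (Suc n) = run \<sigma> (TT ?e) ?h1 n" for n
      proof (induction n)
        case 0 then show ?case by (simp add: \<tau>'_def)
      next
        case (Suc n)
        obtain ys where ys: "run \<sigma> (TT ?e) ?h1 n = ?h1 @ ys" using run_prefix by blast
        have "\<tau>' (run \<sigma> (TT ?e) ?h1 n) = TT ?e (run \<sigma> (TT ?e) ?h1 n)"
          unfolding ys \<tau>'_def by (auto simp: nth_append fun_eq_iff)
        then show ?case using Suc.IH by (simp only: run.simps(2))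
      qed
      from TT[OF False] obtain n where "lost (run \<sigma> (TT ?e) ?h1 n) (\<sigma> (run \<sigma> (TT ?e) ?h1 n))"
        unfolding adam_from_def by blast
      then show ?thesis using eq[of n] by (intro exI[of _ "Suc n"]) simp
    qed
  qed
  thus False using good by blast
qed

theorem gale_stewart:
  "(\<exists>\<sigma>. eve_from lost [] \<sigma>) \<or> (\<exists>\<tau>. adam_from lost [] \<tau>)"
proof (rule disjCI)
  assume nA: "\<not> (\<exists>\<tau>. adam_from lost [] \<tau>)"
  define good where "good h \<longleftrightarrow> \<not> (\<exists>\<tau>. adam_from lost h \<tau>)" for h
  define \<sigma> where "\<sigma> h = (SOME e. \<not> lost h e \<and> (\<forall>d. good (h @ [(e, d)])))" for h
  have \<sigma>good: "good h \<Longrightarrow> \<not> lost h (\<sigma> h) \<and> (\<forall>d. good (h @ [(\<sigma> h, d)]))" for h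
  proof -
    assume "good h"
    hence "\<exists>e. \<not> lost h e \<and> (\<forall>d. good (h @ [(e, d)]))" using GS_step unfolding good_def by blast
    thus ?thesis unfolding \<sigma>_def by (rule someI_ex)
  qed
  have "good (run \<sigma> \<tau> [] n)" for \<tau> n
  proof (induction n)
    case 0 then show ?case using nA unfolding good_def by simp
  next
    case (Suc n) then show ?case using \<sigma>good by simp
  qed
  hence "eve_from lost [] \<sigma>" unfolding eve_from_def using \<sigma>good by blast
  thus "\<exists>\<sigma>. eve_from lost [] \<sigma>" by blast
qed



fun kb :: "('b \<Rightarrow> 'b \<Rightarrow> bool) \<Rightarrow> 'b list \<Rightarrow> 'b list \<Rightarrow> bool" where
  "kb lr s [] \<longleftrightarrow> s \<noteq> []"
| "kb lr [] (b # t) \<longleftrightarrow> False"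
| "kb lr (a # s) (b # t) \<longleftrightarrow> lr a b \<or> (a = b \<and> kb lr s t)"

lemma kb_Nil_left[simp]: "\<not> kb lr [] t"
  by (cases t) auto

lemma kb_irrefl: assumes "\<And>a. \<not> lr a a" shows "\<not> kb lr s s"
  using assms by (induction s) auto

lemma kb_trans:
  assumes tr: "\<And>a b c. lr a b \<Longrightarrow> lr b c \<Longrightarrow> lr a c"
  shows "kb lr s t \<Longrightarrow> kb lr t r \<Longrightarrow> kb lr s r"
proof (induction s arbitrary: t r)
  case Nil then show ?case by simp
next
  case (Cons a s)
  show ?case
  proof (cases r)
    case Nil then show ?thesis by simp
  next
    case (Cons d r')
    then obtain c t' where t: "t = c # t'" using Cons.prems(2) by (cases t) auto
    show ?thesis using Cons.prems Cons.IH tr unfolding t \<open>r = d # r'\<close> by auto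
  qed
qed

lemma kb_total:
  assumes tot: "\<And>a b. a \<in> L \<Longrightarrow> b \<in> L \<Longrightarrow> a = b \<or> lr a b \<or> lr b a"
  shows "set s \<subseteq> L \<Longrightarrow> set t \<subseteq> L \<Longrightarrow> s \<noteq> t \<Longrightarrow> kb lr s t \<or> kb lr t s"
proof (induction s arbitrary: t)
  case Nil then show ?case by (cases t) auto
next
  case (Cons a s)
  show ?case
  proof (cases t)
    case Nil then show ?thesis by simp
  next
    case (Cons b t')
    then show ?thesis using Cons.prems Cons.IH[of t'] tot[of a b] by auto
  qed
qed

lemma kb_extend: "u \<noteq> [] \<Longrightarrow> kb lr (t @ u) t"
  by (induction t) auto

lemma kb_cancel: "(\<And>a. \<not> lr a a) \<Longrightarrow> kb lr (p @ s) (p @ t) \<longleftrightarrow> kb lr s t"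
  by (induction p) auto

lemma kb_Cons_cases: "kb lr (a # s) (b # t) \<Longrightarrow> a = b \<or> lr a b" by auto

lemma eventually_const:
  fixes x :: "nat \<Rightarrow> 'b"
  assumes wf: "wf {(a, b). lr a b}" and tr: "\<And>a b c. lr a b \<Longrightarrow> lr b c \<Longrightarrow> lr a c"
    and dec: "\<forall>n\<ge>N. x (Suc n) = x n \<or> lr (x (Suc n)) (x n)"
  shows "\<exists>M\<ge>N. \<forall>n\<ge>M. x n = x M"
proof -
  obtain z where z: "z \<in> {x n | n. n \<ge> N}" "\<And>y. (y, z) \<in> {(a, b). lr a b} \<Longrightarrow> y \<notin> {x n | n. n \<ge> N}"
    using wfE_min[OF wf, of "x N" "{x n | n. n \<ge> N}"] by blast
  then obtain n0 where n0: "n0 \<ge> N" "z = x n0" by auto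
  have le: "x n = x n0 \<or> lr (x n) (x n0)" if "n \<ge> n0" for n
    using that
  proof (induction n rule: dec_induct)
    case base then show ?case by simp
  next
    case (step m)
    have "m \<ge> N" using step.hyps(1) n0(1) by simp
    hence "x (Suc m) = x m \<or> lr (x (Suc m)) (x m)" using dec by simp
    then show ?case
    proof
      assume "x (Suc m) = x m" then show ?case using step.IH by simp
    next
      assume h: "lr (x (Suc m)) (x m)"
      show ?case using step.IH
      proof
        assume "x m = x n0" then show ?case using h by simp
      next
        assume "lr (x m) (x n0)" then show ?case using h tr[of "x (Suc m)" "x m" "x n0"] by simp
      qed
    qed
  qed
  have "\<forall>n\<ge>n0. x n = x n0"
  proof (intro allI impI)
    fix n assume "n \<ge> n0"
    moreover have "x n \<in> {x n | n. n \<ge> N}" using \<open>n \<ge> n0\<close> n0(1) by auto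
    ultimately show "x n = x n0" using le[of n] z(2) n0(2) by auto
  qed
  thus ?thesis using n0(1) by blast
qed

definition pclosed :: "'b list set \<Rightarrow> bool" where
  "pclosed T \<longleftrightarrow> (\<forall>s u. s @ u \<in> T \<longrightarrow> s \<in> T)"

definition has_branch :: "'b list set \<Rightarrow> bool" where
  "has_branch T \<longleftrightarrow> (\<exists>f. \<forall>k. f k \<in> T \<and> (\<exists>a. f (Suc k) = f k @ [a]))"

lemma kb_wf_on_tree:
  fixes T :: "'b list set" and lr :: "'b \<Rightarrow> 'b \<Rightarrow> bool"
  assumes wf: "wf {(a, b). lr a b}" and tr: "\<And>a b c. lr a b \<Longrightarrow> lr b c \<Longrightarrow> lr a c"
    and T: "pclosed T" and nb: "\<not> has_branch T"
  shows "wf {(s, t). s \<in> T \<and> t \<in> T \<and> kb lr s t}"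
proof (rule ccontr)
  have irr: "\<And>a. \<not> lr a a" using wf_not_refl[OF wf] by simp
  assume "\<not> ?thesis"
  then obtain s where s: "\<forall>i. (s (Suc i), s i) \<in> {(s, t). s \<in> T \<and> t \<in> T \<and> kb lr s t}"
    unfolding wf_iff_no_infinite_down_chain by blast
  hence sT: "\<And>i. s i \<in> T" and sd: "\<And>i. kb lr (s (Suc i)) (s i)" by auto
  define Q where "Q q \<longleftrightarrow> (\<forall>n\<ge>snd q. \<exists>u. s n = fst q @ u)" for q :: "'b list \<times> nat"
  define R where "R q q' \<longleftrightarrow> (\<exists>a. fst q' = fst q @ [a]) \<and> Q q'" for q q' :: "'b list \<times> nat"
  have step: "\<exists>q'. R q q'" if Qq: "Q q" for q
  proof -
    obtain p N where q: "q = (p, N)" by (cases q)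
    define u where "u n = drop (length p) (s n)" for n
    have su: "s n = p @ u n" if "n \<ge> N" for n
      using Qq that unfolding Q_def q u_def by auto
    have ud: "kb lr (u (Suc n)) (u n)" if "n \<ge> N" for n
      using sd[of n] su[of n] su[of "Suc n"] that kb_cancel[of lr p, OF irr] by auto
    have une: "u n \<noteq> []" if "n \<ge> Suc N" for n
    proof -
      have "n = Suc (n - 1)" "n - 1 \<ge> N" using that by auto
      thus ?thesis using ud[of "n - 1"] by (metis kb_Nil_left)
    qed
    let ?x = "\<lambda>n. hd (u n)"
    have decx: "\<forall>n\<ge>Suc N. ?x (Suc n) = ?x n \<or> lr (?x (Suc n)) (?x n)"
    proof (intro allI impI)
      fix n assume n: "n \<ge> Suc N"
      obtain a v where a: "u n = a # v" using une[OF n] by (cases "u n") auto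
      obtain b w where b: "u (Suc n) = b # w" using une[of "Suc n"] n by (cases "u (Suc n)") auto
      have "kb lr (b # w) (a # v)" using ud[of n] n a b by auto
      thus "?x (Suc n) = ?x n \<or> lr (?x (Suc n)) (?x n)" using a b by (simp, blast)
    qed
    have "\<exists>M\<ge>Suc N. \<forall>n\<ge>M. ?x n = ?x M"
      apply (rule eventually_const[OF wf])
       apply (erule (1) tr)
      apply (rule decx)
      done
    then obtain M where M: "M \<ge> Suc N" "\<forall>n\<ge>M. ?x n = ?x M"
      by (elim exE conjE)
    let ?a = "?x M"
    have "Q (p @ [?a], M)" unfolding Q_def
    proof (intro allI impI)
      fix n assume "n \<ge> snd (p @ [?a], M)"
      hence n: "n \<ge> M" by simp
      have "u n \<noteq> []" using une n M(1) by auto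
      then obtain v where v: "u n = ?x n # v" by (cases "u n") auto
      have "?x n = ?a" using M(2) n by blast
      hence "u n = ?a # v" using v by simp
      moreover have "n \<ge> N" using n M(1) by simp
      ultimately have "s n = (p @ [?a]) @ v" using su[of n] by simp
      thus "\<exists>u. s n = fst (p @ [?a], M) @ u" by auto
    qed
    thus ?thesis unfolding R_def q by auto
  qed
  have Q0: "Q ([], 0)" unfolding Q_def by auto
  define f where "f = rec_nat ([], 0) (\<lambda>k q. SOME q'. R q q')"
  have f0: "f 0 = ([], 0)" unfolding f_def by simp
  have fS: "f (Suc k) = (SOME q'. R (f k) q')" for k unfolding f_def by simp
  have Qf: "Q (f k)" for k
  proof (induction k)
    case 0 then show ?case using f0 Q0 by simp
  next
    case (Suc k)
    have "R (f k) (f (Suc k))" unfolding fS using someI_ex[OF step[OF Suc.IH]] .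
    then show ?case unfolding R_def by simp
  qed
  have Rf: "R (f k) (f (Suc k))" for k unfolding fS using someI_ex[OF step[OF Qf]] .
  have "has_branch T"
    unfolding has_branch_def
  proof (intro exI[of _ "\<lambda>k. fst (f k)"] allI conjI)
    fix k
    obtain u where "s (snd (f k)) = fst (f k) @ u" using Qf[of k] unfolding Q_def by auto
    thus "fst (f k) \<in> T" using T sT unfolding pclosed_def by metis
    show "\<exists>a. fst (f (Suc k)) = fst (f k) @ [a]" using Rf[of k] unfolding R_def by simp
  qed
  thus False using nb by simp
qed

lemma embed_no_branch:
  assumes wfl: "wf {(a, b). lt a b}"
    and h: "\<And>s t. s \<in> T \<Longrightarrow> t \<in> T \<Longrightarrow> kb lr s t \<Longrightarrow> lt (h s) (h t)"
  shows "\<not> has_branch T"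
proof
  assume "has_branch T"
  then obtain f where f: "\<forall>k. f k \<in> T \<and> (\<exists>a. f (Suc k) = f k @ [a])" unfolding has_branch_def by blast
  have "\<forall>k. ((h \<circ> f) (Suc k), (h \<circ> f) k) \<in> {(a, b). lt a b}"
  proof
    fix k
    obtain a where "f (Suc k) = f k @ [a]" using f by blast
    hence "kb lr (f (Suc k)) (f k)" using kb_extend[of "[a]"] by simp
    thus "((h \<circ> f) (Suc k), (h \<circ> f) k) \<in> {(a, b). lt a b}" using h f by auto
  qed
  thus False using wfl unfolding wf_iff_no_infinite_down_chain by blast
qed



definition pathv :: "'q \<Rightarrow> 'q list list \<Rightarrow> 'q list" where "pathv qI v = qI # concat v"
definition Ln :: "'q list list \<Rightarrow> nat" where "Ln v = length (concat v)"

definition validF :: "'q \<Rightarrow> ('q \<times> 'a \<times> 'q) set \<Rightarrow> ('q \<times> 'a \<times> 'q \<Rightarrow> int) \<Rightarrow> (nat \<Rightarrow> 'q set) \<Rightarrow> (nat \<Rightarrow> 'a) \<Rightarrow> 'q list list \<Rightarrow> bool" where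
  "validF qI Delta w obs act v \<longleftrightarrow>
     (\<forall>s\<in>set v. s \<noteq> []) \<and>
     (\<forall>i\<le>Ln v. pathv qI v ! i \<in> obs i) \<and>
     (\<forall>i<Ln v. (pathv qI v ! i, act i, pathv qI v ! Suc i) \<in> Delta) \<and>
     (\<forall>j. 0 < j \<and> j < length v \<longrightarrow>
        int (length (hd v)) * path_weight w (\<lambda>i. pathv qI v ! i) act (Ln (take (Suc j) v))
          \<le> - int (Ln (take (Suc j) v)))"

lemma path_weight_cong:
  assumes "\<And>i. i \<le> n \<Longrightarrow> qs i = qs' i" "\<And>i. i < n \<Longrightarrow> act i = act' i"
  shows "path_weight w qs act n = path_weight w qs' act' n"
  unfolding path_weight_def using assms by (intro sum.cong) auto

lemma pathv_length: "length (pathv qI v) = Suc (Ln v)"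
  unfolding pathv_def Ln_def by simp

lemma pathv_append_nth: "i \<le> Ln v \<Longrightarrow> pathv qI (v @ u) ! i = pathv qI v ! i"
  unfolding pathv_def Ln_def by (cases i) (auto simp: nth_append)

lemma Ln_append: "Ln (v @ u) = Ln v + Ln u" unfolding Ln_def by simp

lemma validF_cong:
  assumes "\<And>i. i \<le> Ln v \<Longrightarrow> obs i = obs' i" "\<And>i. i < Ln v \<Longrightarrow> act i = act' i"
  shows "validF qI Delta w obs act v = validF qI Delta w obs' act' v"
proof -
  have "Ln (take (Suc j) v) \<le> Ln v" for j
    using Ln_append[of "take (Suc j) v" "drop (Suc j) v"] by simp
  hence "\<And>j. path_weight w (\<lambda>i. pathv qI v ! i) act (Ln (take (Suc j) v)) =
         path_weight w (\<lambda>i. pathv qI v ! i) act' (Ln (take (Suc j) v))"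
  proof -
    fix j
    show "path_weight w (\<lambda>i. pathv qI v ! i) act (Ln (take (Suc j) v)) =
         path_weight w (\<lambda>i. pathv qI v ! i) act' (Ln (take (Suc j) v))"
  proof (intro path_weight_cong)
    fix i assume "i < Ln (take (Suc j) v)"
    moreover have "Ln (take (Suc j) v) \<le> Ln v" by fact
    ultimately show "act i = act' i" using assms(2) by simp
  qed simp
  qed
  thus ?thesis unfolding validF_def using assms by auto
qed

lemma validF_prefix:
  assumes "validF qI Delta w obs act (v @ u)"
  shows "validF qI Delta w obs act v"
proof -
  have L: "Ln v \<le> Ln (v @ u)" using Ln_append[of v u] by simp
  have p: "\<And>i. i \<le> Ln v \<Longrightarrow> pathv qI (v @ u) ! i = pathv qI v ! i" by (rule pathv_append_nth)
  have 1: "\<forall>s\<in>set v. s \<noteq> []" using assms unfolding validF_def by auto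
  have 2: "\<forall>i\<le>Ln v. pathv qI v ! i \<in> obs i" using assms L p unfolding validF_def by (metis le_trans)
  have 3: "\<forall>i<Ln v. (pathv qI v ! i, act i, pathv qI v ! Suc i) \<in> Delta"
  proof (intro allI impI)
    fix i assume i: "i < Ln v"
    have "(pathv qI (v @ u) ! i, act i, pathv qI (v @ u) ! Suc i) \<in> Delta"
      using assms i L unfolding validF_def by auto
    thus "(pathv qI v ! i, act i, pathv qI v ! Suc i) \<in> Delta" using p[of i] p[of "Suc i"] i by simp
  qed
  have 4: "\<forall>j. 0 < j \<and> j < length v \<longrightarrow>
        int (length (hd v)) * path_weight w (\<lambda>i. pathv qI v ! i) act (Ln (take (Suc j) v))
          \<le> - int (Ln (take (Suc j) v))"
  proof (intro allI impI)
    fix j assume j: "0 < j \<and> j < length v"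
    have tk: "take (Suc j) (v @ u) = take (Suc j) v" using j by (simp add: take_append)
    have hd: "hd (v @ u) = hd v" using j by (cases v) auto
    have Lj: "Ln (take (Suc j) v) \<le> Ln v"
      using Ln_append[of "take (Suc j) v" "drop (Suc j) v"] by simp
    have "path_weight w (\<lambda>i. pathv qI (v @ u) ! i) act (Ln (take (Suc j) v)) =
          path_weight w (\<lambda>i. pathv qI v ! i) act (Ln (take (Suc j) v))"
      using p Lj by (intro path_weight_cong) auto
    moreover have "int (length (hd (v @ u))) * path_weight w (\<lambda>i. pathv qI (v @ u) ! i) act (Ln (take (Suc j) (v @ u)))
          \<le> - int (Ln (take (Suc j) (v @ u)))"
      using assms j unfolding validF_def by (simp del: take_append)
    ultimately show "int (length (hd v)) * path_weight w (\<lambda>i. pathv qI v ! i) act (Ln (take (Suc j) v))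
          \<le> - int (Ln (take (Suc j) v))" using tk hd by (simp del: take_append)
  qed
  show ?thesis unfolding validF_def using 1 2 3 4 by blast
qed

lemma validF_pclosed: "pclosed {v. validF qI Delta w obs act v}"
  unfolding pclosed_def by (auto dest: validF_prefix)


lemma lower_MP_neg_iff:
  "\<not> (0 \<le> lower_MP w qs act) \<longleftrightarrow>
   (\<exists>y<0. \<forall>N. \<exists>n\<ge>N. ereal (real_of_int (path_weight w qs act n) / real n) \<le> y)"
  unfolding lower_MP_def le_Liminf_iff eventually_sequentially by (auto simp: not_less)

lemma branch_bad:
  assumes br: "has_branch {v. validF qI Delta w obs act v}"
  shows "\<exists>qs. concretisation Delta obs act qs \<and> \<not> (0 \<le> lower_MP w qs act)"
proof -
  obtain f where f: "\<forall>k. validF qI Delta w obs act (f k) \<and> (\<exists>a. f (Suc k) = f k @ [a])"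
    using br unfolding has_branch_def by auto
  define sg where "sg k = (SOME a. f (Suc k) = f k @ [a])" for k
  have fS: "f (Suc k) = f k @ [sg k]" for k unfolding sg_def using f by (metis (mono_tags) someI_ex)
  have fv: "validF qI Delta w obs act (f k)" for k using f by blast
  have sgne: "sg k \<noteq> []" for k using fv[of "Suc k"] unfolding validF_def fS by auto
  have LnS: "Ln (f (Suc k)) = Ln (f k) + length (sg k)" for k unfolding fS Ln_def by simp
  have Lnk: "Ln (f k) \<ge> k" for k
  proof (induction k)
    case (Suc k) then show ?case using LnS[of k] sgne[of k] by (cases "sg k") auto
  qed simp
  have lenk: "length (f k) \<ge> k" for k by (induction k) (auto simp: fS)
  have mono: "\<exists>u. f j = f i @ u" if "i \<le> j" for i j
    using that
  proof (induction j rule: dec_induct)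
    case base then show ?case by auto
  next
    case (step j) then show ?case using fS[of j] by auto
  qed
  define qs where "qs i = pathv qI (f i) ! i" for i
  have qs_eq: "pathv qI (f j) ! i = qs i" if "i \<le> Ln (f j)" for i j
  proof (cases "i \<le> j")
    case True
    then obtain u where "f j = f i @ u" using mono by blast
    moreover have "i \<le> Ln (f i)" using Lnk by simp
    ultimately show ?thesis unfolding qs_def by (simp add: pathv_append_nth)
  next
    case False
    then obtain u where "f i = f j @ u" using mono[of j i] by auto
    then show ?thesis unfolding qs_def using that by (simp add: pathv_append_nth)
  qed
  have conc: "concretisation Delta obs act qs"
    unfolding concretisation_def
  proof (intro conjI allI)
    fix i
    show "qs i \<in> obs i" using fv[of i] Lnk[of i] unfolding validF_def qs_def by auto
    have "i < Ln (f (Suc i))" using Lnk[of "Suc i"] by simp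
    hence "(pathv qI (f (Suc i)) ! i, act i, pathv qI (f (Suc i)) ! Suc i) \<in> Delta"
      using fv[of "Suc i"] unfolding validF_def by blast
    moreover have "pathv qI (f (Suc i)) ! i = qs i" using qs_eq \<open>i < Ln (f (Suc i))\<close> by simp
    moreover have "pathv qI (f (Suc i)) ! Suc i = qs (Suc i)" using qs_eq \<open>i < Ln (f (Suc i))\<close> by simp
    ultimately show "(qs i, act i, qs (Suc i)) \<in> Delta" by simp
  qed
  define k0 where "k0 = length (hd (f 1))"
  have f1ne: "f 1 \<noteq> []" using fS[of 0] by simp
  have hdj: "hd (f j) = hd (f 1)" if j1: "j \<ge> 1" for j
  proof -
    obtain u where "f j = f 1 @ u" using mono[OF j1] by blast
    thus ?thesis using f1ne by simp
  qed
  have k0pos: "k0 \<ge> 1"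
  proof -
    have "hd (f 1) \<in> set (f 1)" using f1ne by simp
    hence "hd (f 1) \<noteq> []" using fv[of 1] unfolding validF_def by blast
    thus ?thesis unfolding k0_def by (cases "hd (f 1)") auto
  qed
  have bad: "ereal (real_of_int (path_weight w qs act (Ln (f j))) / real (Ln (f j))) \<le> ereal (- 1 / real k0)"
    if j: "j \<ge> 2" for j
  proof -
    define m where "m = length (f j) - 1"
    have m: "0 < m \<and> m < length (f j)" using lenk[of j] j unfolding m_def by auto
    have tk: "take (Suc m) (f j) = f j" using m unfolding m_def by simp
    have "int (length (hd (f j))) * path_weight w (\<lambda>i. pathv qI (f j) ! i) act (Ln (take (Suc m) (f j)))
          \<le> - int (Ln (take (Suc m) (f j)))" using fv[of j] m unfolding validF_def by blast
    hence ineq0: "int k0 * path_weight w (\<lambda>i. pathv qI (f j) ! i) act (Ln (f j)) \<le> - int (Ln (f j))"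
      using tk hdj[of j] j unfolding k0_def by simp
    have "path_weight w (\<lambda>i. pathv qI (f j) ! i) act (Ln (f j)) = path_weight w qs act (Ln (f j))"
      by (rule path_weight_cong) (auto simp: qs_eq)
    with ineq0 have ineq: "int k0 * path_weight w qs act (Ln (f j)) \<le> - int (Ln (f j))" by simp
    have epos: "Ln (f j) > 0" using Lnk[of j] j by simp
    let ?p = "real_of_int (path_weight w qs act (Ln (f j)))"
    let ?e = "real (Ln (f j))"
    have "real k0 * ?p \<le> - ?e" using ineq by (metis of_int_le_iff of_int_minus of_int_mult of_int_of_nat_eq)
    hence "?p / ?e \<le> - 1 / real k0" using k0pos epos by (simp add: field_simps)
    thus ?thesis by simp
  qed
  have "\<not> (0 \<le> lower_MP w qs act)"
    unfolding lower_MP_neg_iff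
  proof (intro exI[of _ "ereal (- 1 / real k0)"] conjI allI)
    show "ereal (- 1 / real k0) < 0" using k0pos by simp
    fix N :: nat
    let ?j = "max N 2"
    have "Ln (f ?j) \<ge> N" using Lnk[of ?j] by simp
    thus "\<exists>n\<ge>N. ereal (real_of_int (path_weight w qs act n) / real n) \<le> ereal (- 1 / real k0)"
      using bad[of ?j] by auto
  qed
  thus ?thesis using conc by blast
qed


lemma bad_branch:
  assumes conc: "concretisation Delta obs act qs" and neg: "\<not> (0 \<le> lower_MP w qs act)"
    and obs0: "obs 0 = {qI}"
  shows "has_branch {v. validF qI Delta w obs act v}"
proof -
  obtain y where y: "y < 0" "\<forall>N. \<exists>n\<ge>N. ereal (real_of_int (path_weight w qs act n) / real n) \<le> y"
    using neg unfolding lower_MP_neg_iff by blast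
  obtain r :: real where r: "r < 0" "y \<le> ereal r"
  proof (cases y)
    case (real r) then show ?thesis using that y(1) by auto
  next
    case PInf then show ?thesis using y(1) by simp
  next
    case MInf then show ?thesis using that[of "-1"] by simp
  qed
  define k :: nat where "k = nat (ceiling (- 1 / r)) + 1"
  have kpos: "k \<ge> 1" unfolding k_def by simp
  have kr: "- 1 / real k \<ge> r"
  proof -
    have "real k \<ge> - 1 / r" unfolding k_def by linarith
    hence "real k * (- r) \<ge> 1" using r(1) by (simp add: field_simps)
    thus ?thesis using r(1) kpos by (simp add: field_simps)
  qed
  define pwq where "pwq n = path_weight w qs act n" for n
  define B where "B = {n. n > 0 \<and> int k * pwq n \<le> - int n}"
  have Binf: "\<exists>n\<ge>N. n \<in> B" for N
  proof -
    obtain n where n: "n \<ge> Suc N" "ereal (real_of_int (pwq n) / real n) \<le> y"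
      using y(2) unfolding pwq_def by blast
    have npos: "n > 0" using n(1) by simp
    have "real_of_int (pwq n) / real n \<le> - 1 / real k" using n(2) r(2) kr by (metis ereal_less_eq(3) order_trans)
    hence "real k * real_of_int (pwq n) \<le> - real n" using npos kpos by (simp add: field_simps)
    hence "int k * pwq n \<le> - int n" by (metis of_int_le_iff of_int_minus of_int_mult of_int_of_nat_eq)
    thus ?thesis using n(1) npos unfolding B_def by (intro exI[of _ n]) auto
  qed
  define nb where "nb m = (LEAST n. n > m \<and> n \<in> B)" for m
  have nb: "nb m > m \<and> nb m \<in> B" for m
  proof -
    obtain n where n: "n \<ge> Suc m" "n \<in> B" using Binf by blast
    have "n > m \<and> n \<in> B" using n by simp
    hence "\<exists>n. n > m \<and> n \<in> B" by (rule exI)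
    thus ?thesis unfolding nb_def by (rule LeastI_ex)
  qed
  define E where "E = rec_nat k (\<lambda>j e. nb e)"
  have E0: "E 0 = k" and ES: "E (Suc j) = nb (E j)" for j unfolding E_def by simp_all
  define st where "st j = (case j of 0 \<Rightarrow> 0 | Suc i \<Rightarrow> E i)" for j
  have st0: "st 0 = 0" and stS: "st (Suc j) = E j" for j unfolding st_def by simp_all
  have stE: "st j < E j" for j
    by (cases j) (use kpos E0 nb ES st0 stS in auto)
  have st_mono: "i \<le> j \<Longrightarrow> st i \<le> st j" for i j
  proof (induction j rule: dec_induct)
    case (step j) then show ?case using stE[of j] stS[of j] by simp
  qed simp
  define seg where "seg i = map qs [Suc (st i)..<Suc (E i)]" for i
  define f where "f j = map seg [0..<j]" for j
  have fS: "f (Suc j) = f j @ [seg j]" for j unfolding f_def by simp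
  have concat_f: "concat (f j) = map qs [1..<Suc (st j)]" for j
  proof (induction j)
    case 0 then show ?case unfolding f_def using st0 by simp
  next
    case (Suc j)
    have "concat (f (Suc j)) = map qs [1..<Suc (st j)] @ map qs [Suc (st j)..<Suc (E j)]"
      using Suc.IH unfolding fS seg_def by simp
    also have "\<dots> = map qs ([1..<Suc (st j)] @ [Suc (st j)..<Suc (E j)])" by simp
    also have "[1..<Suc (st j)] @ [Suc (st j)..<Suc (E j)] = [1..<Suc (E j)]"
    proof -
      have "Suc (E j) = Suc (st j) + (E j - st j)" using stE[of j] by simp
      thus ?thesis using upt_add_eq_append[of 1 "Suc (st j)" "E j - st j"] by simp
    qed
    finally show ?case using stS by simp
  qed
  have q0: "qs 0 = qI" using conc obs0 unfolding concretisation_def by blast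
  have Lnf: "Ln (f j) = st j" for j unfolding Ln_def concat_f by simp
  have pathf: "pathv qI (f j) ! i = qs i" if "i \<le> st j" for i j
  proof (cases i)
    case 0 then show ?thesis using q0 unfolding pathv_def by simp
  next
    case (Suc i')
    have "map qs [1..<Suc (st j)] ! i' = qs (1 + i')"
      using that Suc by (intro nth_map_upt) simp
    then show ?thesis using Suc unfolding pathv_def concat_f by (simp del: upt_Suc)
  qed
  have take_f: "take (Suc i) (f j) = f (Suc i)" if "i < j" for i j
    using that unfolding f_def by (simp add: take_map)
  have valid: "validF qI Delta w obs act (f j)" for j
    unfolding validF_def
  proof (intro conjI allI impI ballI)
    fix s assume "s \<in> set (f j)"
    then obtain i where "s = seg i" unfolding f_def by auto
    thus "s \<noteq> []" unfolding seg_def using stE[of i] by simp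
  next
    fix i assume "i \<le> Ln (f j)"
    thus "pathv qI (f j) ! i \<in> obs i" using pathf conc Lnf unfolding concretisation_def by simp
  next
    fix i assume "i < Ln (f j)"
    thus "(pathv qI (f j) ! i, act i, pathv qI (f j) ! Suc i) \<in> Delta"
      using pathf conc Lnf unfolding concretisation_def by simp
  next
    fix i assume i: "0 < i \<and> i < length (f j)"
    hence ij: "i < j" unfolding f_def by simp
    have "[0..<j] = 0 # [1..<j]" using ij by (simp add: upt_conv_Cons)
    hence hd: "hd (f j) = seg 0" unfolding f_def by simp
    have lhd: "length (hd (f j)) = k" unfolding hd seg_def using st0 E0 by simp
    have Lt: "Ln (take (Suc i) (f j)) = E i" using take_f[OF ij] Lnf stS by simp
    have EB: "E i \<in> B"
    proof -
      obtain i' where "i = Suc i'" using i by (cases i) auto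
      thus ?thesis using ES nb by simp
    qed
    have Ele: "E i \<le> st j" using st_mono[of "Suc i" j] ij stS by simp
    have "path_weight w (\<lambda>i. pathv qI (f j) ! i) act (E i) = pwq (E i)"
      unfolding pwq_def by (rule path_weight_cong) (use pathf Ele in auto)
    thus "int (length (hd (f j))) * path_weight w (\<lambda>i. pathv qI (f j) ! i) act (Ln (take (Suc i) (f j)))
          \<le> - int (Ln (take (Suc i) (f j)))" using EB unfolding lhd Lt B_def by simp
  qed
  show ?thesis unfolding has_branch_def using valid fS by blast
qed

lemma win_iff_no_branch:
  assumes "obs 0 = {qI}"
  shows "winning_Eve_play Delta w obs act \<longleftrightarrow> \<not> has_branch {v. validF qI Delta w obs act v}"
proof
  assume W: "winning_Eve_play Delta w obs act"
  show "\<not> has_branch {v. validF qI Delta w obs act v}"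
  proof
    assume "has_branch {v. validF qI Delta w obs act v}"
    from branch_bad[OF this] obtain qs where "concretisation Delta obs act qs" "\<not> (0 \<le> lower_MP w qs act)"
      by blast
    thus False using W unfolding winning_Eve_play_def by blast
  qed
next
  assume nb: "\<not> has_branch {v. validF qI Delta w obs act v}"
  show "winning_Eve_play Delta w obs act"
    unfolding winning_Eve_play_def
  proof (intro allI impI)
    fix qs assume c: "concretisation Delta obs act qs"
    show "0 \<le> lower_MP w qs act"
    proof (rule ccontr)
      assume "\<not> (0 \<le> lower_MP w qs act)"
      from bad_branch[OF c this assms] nb show False by simp
    qed
  qed
qed



lemma sort_exists:
  assumes irr: "\<And>a. \<not> R a a" and tr: "\<And>a b c. R a b \<Longrightarrow> R b c \<Longrightarrow> R a c"
  shows "finite V \<Longrightarrow> (\<forall>a\<in>V. \<forall>b\<in>V. a \<noteq> b \<longrightarrow> R a b \<or> R b a) \<Longrightarrow>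
     \<exists>vs. set vs = V \<and> distinct vs \<and> sorted_wrt R vs"
proof (induction V rule: finite_induct)
  case empty then show ?case by auto
next
  case (insert x F)
  from insert.IH insert.prems obtain vs where vs: "set vs = F" "distinct vs" "sorted_wrt R vs" by auto
  let ?l = "filter (\<lambda>y. R y x) vs" and ?r = "filter (\<lambda>y. R x y) vs"
  have tot: "\<forall>y\<in>F. R y x \<or> R x y" using insert.prems insert.hyps(2) by auto
  have "set (?l @ [x] @ ?r) = insert x F" using vs(1) tot by auto
  moreover have "distinct (?l @ [x] @ ?r)"
    using vs(2) irr by (auto intro: tr dest: tr)
  moreover have "sorted_wrt R (?l @ [x] @ ?r)"
    unfolding sorted_wrt_append using vs(3) sorted_wrt_filter by (auto intro: tr)
  ultimately show ?case by blast
qed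

definition idx :: "'b list \<Rightarrow> 'b \<Rightarrow> nat" where "idx vs v = (LEAST i. i < length vs \<and> vs ! i = v)"

lemma idx: "v \<in> set vs \<Longrightarrow> idx vs v < length vs \<and> vs ! idx vs v = v"
  unfolding idx_def by (rule LeastI_ex) (simp add: in_set_conv_nth)

lemma length_le_concat: "\<forall>s\<in>set v. s \<noteq> [] \<Longrightarrow> length v \<le> length (concat v)"
proof (induction v)
  case (Cons s v) then show ?case by (cases s) auto
qed simp

locale mg = kc K U for K :: "'u set" and U +
  fixes Q :: "'q set" and qI :: 'q and Sig :: "'a set" and Delta :: "('q \<times> 'a \<times> 'q) set"
    and w :: "'q \<times> 'a \<times> 'q \<Rightarrow> int" and Obs :: "'q set set"
  assumes lim: "MPG_limited Q qI Sig Delta Obs"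
begin

lemma finQ: "finite Q" using lim unfolding MPG_limited_def MPG_partial_def by blast
lemma finSig: "finite Sig" using lim unfolding MPG_limited_def MPG_partial_def by blast
lemma DeltaQ: "Delta \<subseteq> Q \<times> Sig \<times> Q" using lim unfolding MPG_limited_def MPG_partial_def by blast
lemma total: "q \<in> Q \<Longrightarrow> a \<in> Sig \<Longrightarrow> \<exists>q'. (q, a, q') \<in> Delta"
  using lim unfolding MPG_limited_def MPG_partial_def by blast
lemma part: "partition_on Q Obs" using lim unfolding MPG_limited_def MPG_partial_def by blast
lemma qIObs: "{qI} \<in> Obs" using lim unfolding MPG_limited_def by blast

lemma Obs_sub: "o' \<in> Obs \<Longrightarrow> o' \<subseteq> Q" using partition_onD1[OF part] by blast
lemma Obs_ne: "o' \<in> Obs \<Longrightarrow> o' \<noteq> {}" using partition_onD3[OF part] by blast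
lemma Obs_cover: "q \<in> Q \<Longrightarrow> \<exists>o'\<in>Obs. q \<in> o'" using partition_onD1[OF part] by blast
lemma Obs_eq: "o1 \<in> Obs \<Longrightarrow> o2 \<in> Obs \<Longrightarrow> q \<in> o1 \<Longrightarrow> q \<in> o2 \<Longrightarrow> o1 = o2"
  using partition_onD2[OF part] unfolding disjoint_def by blast
lemma finObs: "finite Obs"
proof -
  have "Obs \<subseteq> Pow Q" using Obs_sub by blast
  thus ?thesis using finQ by (meson finite_Pow_iff finite_subset)
qed

lemma play_obs0: "is_play qI Delta Obs obs act \<Longrightarrow> obs 0 = {qI}"
  unfolding is_play_def abstract_path_def using Obs_eq[OF _ qIObs] by blast

lemma play_Obs: "is_play qI Delta Obs obs act \<Longrightarrow> obs i \<in> Obs"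
  unfolding is_play_def abstract_path_def by blast

lemma play_Sig: "is_play qI Delta Obs obs act \<Longrightarrow> act i \<in> Sig"
  unfolding is_play_def abstract_path_def using DeltaQ by blast

definition step_ok :: "'q set \<Rightarrow> 'a \<Rightarrow> 'q set \<Rightarrow> bool" where
  "step_ok o1 a o2 \<longleftrightarrow> o2 \<in> Obs \<and> (\<exists>q\<in>o1. \<exists>q'\<in>o2. (q, a, q') \<in> Delta)"

lemma play_step: "is_play qI Delta Obs obs act \<Longrightarrow> step_ok (obs i) (act i) (obs (Suc i))"
  unfolding is_play_def abstract_path_def step_ok_def by blast

lemma step_ok_post: "step_ok o1 a o2 \<Longrightarrow> o2 \<in> Obs \<and> o2 \<inter> post Delta a o1 \<noteq> {}"
  unfolding step_ok_def post_def by blast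

lemma step_ok_ex: assumes "o1 \<in> Obs" "a \<in> Sig" shows "\<exists>o2. step_ok o1 a o2"
proof -
  obtain q where q: "q \<in> o1" using Obs_ne[OF assms(1)] by blast
  have "q \<in> Q" using q Obs_sub[OF assms(1)] by blast
  then obtain q' where q': "(q, a, q') \<in> Delta" using total assms(2) by blast
  have "q' \<in> Q" using q' DeltaQ by blast
  then obtain o2 where "o2 \<in> Obs" "q' \<in> o2" using Obs_cover by blast
  thus ?thesis unfolding step_ok_def using q q' by blast
qed

definition enc :: "'q list \<Rightarrow> nat" where "enc = to_nat_on (lists Q)"
definition lr :: "'q list \<Rightarrow> 'q list \<Rightarrow> bool" where "lr a b \<longleftrightarrow> enc a < enc b"

lemma lr_wf: "wf {(a, b). lr a b}"
proof -
  have "{(a, b). lr a b} = inv_image less_than enc" unfolding lr_def inv_image_def by auto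
  thus ?thesis by simp
qed

lemma lr_trans: "lr a b \<Longrightarrow> lr b c \<Longrightarrow> lr a c" unfolding lr_def by simp
lemma lr_irrefl: "\<not> lr a a" unfolding lr_def by simp
lemma lr_total: "a \<in> lists Q \<Longrightarrow> b \<in> lists Q \<Longrightarrow> a = b \<or> lr a b \<or> lr b a"
proof -
  assume ab: "a \<in> lists Q" "b \<in> lists Q"
  have "countable (lists Q)" using finQ by (simp add: countable_finite)
  hence "inj_on enc (lists Q)" unfolding enc_def by (rule inj_on_to_nat_on)
  thus ?thesis using ab unfolding lr_def by (metis inj_onD linorder_neqE_nat)
qed

abbreviation kbn where "kbn \<equiv> kb lr"

lemma kbn_irrefl: "\<not> kbn s s" using kb_irrefl[of lr s] lr_irrefl by blast
lemma kbn_trans: "kbn s t \<Longrightarrow> kbn t r \<Longrightarrow> kbn s r" using kb_trans[of lr s t r] lr_trans by blast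

abbreviation valid where "valid \<equiv> validF qI Delta w"

definition osh :: "((('a \<times> ('q list list \<Rightarrow> 'u)) \<times> 'q set) list) \<Rightarrow> 'q set list" where
  "osh h = {qI} # map snd h"
definition ash :: "((('a \<times> ('q list list \<Rightarrow> 'u)) \<times> 'q set) list) \<Rightarrow> 'a list" where
  "ash h = map (\<lambda>x. fst (fst x)) h"

definition Vs :: "(nat \<Rightarrow> 'q set) \<Rightarrow> (nat \<Rightarrow> 'a) \<Rightarrow> nat \<Rightarrow> 'q list list set" where
  "Vs ob ac n = {v. Ln v \<le> n \<and> valid ob ac v}"

definition Vh where "Vh h = Vs (\<lambda>i. osh h ! i) (\<lambda>i. ash h ! i) (length h)"

definition Ah where "Ah h g v = (if Ln v < length h then snd (fst (h ! Ln v)) v else g v)"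

definition advOK where "advOK h \<longleftrightarrow> (\<forall>i<length h. step_ok (osh h ! i) (ash h ! i) (osh h ! Suc i))"

definition ordOK where "ordOK h g \<longleftrightarrow> (\<forall>v\<in>Vh h. \<forall>v'\<in>Vh h. kbn v v' \<longrightarrow> lt (Ah h g v) (Ah h g v'))"

definition lost where "lost h e \<longleftrightarrow> advOK h \<and> (fst e \<notin> Sig \<or> \<not> ordOK h (snd e))"

lemma Vs_cong:
  assumes "\<And>i. i \<le> n \<Longrightarrow> ob i = ob' i" "\<And>i. i < n \<Longrightarrow> ac i = ac' i"
  shows "Vs ob ac n = Vs ob' ac' n"
  unfolding Vs_def using validF_cong[of _ ob ob' ac ac'] assms by (auto simp del: Ln_def)

lemma osh_length: "length (osh h) = Suc (length h)" unfolding osh_def by simp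

lemma osh_append: "i \<le> length h \<Longrightarrow> osh (h @ h') ! i = osh h ! i"
  unfolding osh_def by (cases i) (auto simp: nth_append)
lemma ash_append: "i < length h \<Longrightarrow> ash (h @ h') ! i = ash h ! i"
  unfolding ash_def by (auto simp: nth_append)

lemma advOK_prefix: "advOK (h @ h') \<Longrightarrow> advOK h"
  unfolding advOK_def using osh_append ash_append by (metis Suc_leI less_imp_le_nat trans_less_add1 length_append)

lemma advOK_snoc: "advOK (h @ [x]) \<longleftrightarrow> advOK h \<and> step_ok (osh h ! length h) (fst (fst x)) (snd x)"
proof -
  have o1: "osh (h @ [x]) ! length h = osh h ! length h" by (rule osh_append) simp
  have o2: "osh (h @ [x]) ! Suc (length h) = snd x" unfolding osh_def by (simp add: nth_append)
  have a2: "ash (h @ [x]) ! length h = fst (fst x)" unfolding ash_def by (simp add: nth_append)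
  have "(\<forall>i<Suc (length h). step_ok (osh (h @ [x]) ! i) (ash (h @ [x]) ! i) (osh (h @ [x]) ! Suc i)) \<longleftrightarrow>
        (\<forall>i<length h. step_ok (osh (h @ [x]) ! i) (ash (h @ [x]) ! i) (osh (h @ [x]) ! Suc i)) \<and>
        step_ok (osh (h @ [x]) ! length h) (ash (h @ [x]) ! length h) (osh (h @ [x]) ! Suc (length h))"
    by (auto simp: less_Suc_eq)
  moreover have "(\<forall>i<length h. step_ok (osh (h @ [x]) ! i) (ash (h @ [x]) ! i) (osh (h @ [x]) ! Suc i)) \<longleftrightarrow> advOK h"
    unfolding advOK_def using osh_append[of _ h "[x]"] ash_append[of _ h "[x]"] by (auto simp: Suc_leI)
  ultimately show ?thesis unfolding advOK_def using o1 o2 a2 by simp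
qed


primrec bh :: "(((('a \<times> ('q list list \<Rightarrow> 'u)) \<times> 'q set) list) \<Rightarrow> ('a \<times> ('q list list \<Rightarrow> 'u))) \<Rightarrow> (nat \<Rightarrow> 'q set) \<Rightarrow> nat \<Rightarrow> ((('a \<times> ('q list list \<Rightarrow> 'u)) \<times> 'q set) list)" where
  "bh \<sigma> ob 0 = []"
| "bh \<sigma> ob (Suc n) = bh \<sigma> ob n @ [(\<sigma> (bh \<sigma> ob n), ob (Suc n))]"

lemma bh_len: "length (bh \<sigma> ob n) = n" by (induction n) auto

lemma bh_nth: "j < n \<Longrightarrow> bh \<sigma> ob n ! j = (\<sigma> (bh \<sigma> ob j), ob (Suc j))"
  by (induction n) (auto simp: nth_append bh_len less_Suc_eq)

lemma bh_cong: "(\<And>i. i \<le> n \<Longrightarrow> ob i = ob' i) \<Longrightarrow> bh \<sigma> ob n = bh \<sigma> ob' n"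
  by (induction n) auto

lemma run_bh: "run \<sigma> (\<lambda>h e. ob (Suc (length h))) [] n = bh \<sigma> ob n"
  by (induction n) (auto simp: bh_len)

lemma osh_bh: assumes "ob 0 = {qI}" "i \<le> n" shows "osh (bh \<sigma> ob n) ! i = ob i"
proof (cases i)
  case 0 then show ?thesis using assms unfolding osh_def by simp
next
  case (Suc j)
  hence "j < n" using assms by simp
  thus ?thesis unfolding osh_def Suc using bh_nth[of j n] by (simp add: bh_len)
qed

lemma ash_bh: "i < n \<Longrightarrow> ash (bh \<sigma> ob n) ! i = fst (\<sigma> (bh \<sigma> ob i))"
  unfolding ash_def using bh_nth[of i n] by (simp add: bh_len)

definition a0 where "a0 = (SOME a. a \<in> Sig)"

definition lEs where
  "lEs \<sigma> os as = (let e = fst (\<sigma> (bh \<sigma> (\<lambda>i. os ! i) (length os - 1))) in if e \<in> Sig then e else a0)"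

lemma case1:
  assumes E: "eve_from lost [] \<sigma>"
  shows "eve_wins qI Sig Delta w Obs"
  unfolding eve_wins_def
proof (intro exI[of _ "lEs \<sigma>"] conjI allI impI)
  show "eve_strategy qI Sig Delta Obs (lEs \<sigma>)"
    unfolding eve_strategy_def
  proof (intro ballI, clarify)
    fix os as assume "(os, as) \<in> Prefs qI Delta Obs"
    then obtain obs act where "is_play qI Delta Obs obs act" unfolding Prefs_def by blast
    hence "act 0 \<in> Sig" by (rule play_Sig)
    hence "a0 \<in> Sig" unfolding a0_def by (rule someI)
    thus "lEs \<sigma> os as \<in> Sig" unfolding lEs_def Let_def by auto
  qed
next
  fix obs act assume pc: "is_play qI Delta Obs obs act \<and> consistent_Eve (lEs \<sigma>) obs act"
  hence P: "is_play qI Delta Obs obs act" and C: "consistent_Eve (lEs \<sigma>) obs act" by auto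
  have ob0: "obs 0 = {qI}" using play_obs0[OF P] .
  let ?B = "bh \<sigma> obs"
  have lE_at: "lEs \<sigma> (map obs [0..<Suc n]) (map act [0..<n]) =
     (let e = fst (\<sigma> (?B n)) in if e \<in> Sig then e else a0)" for n
  proof -
    have "bh \<sigma> (\<lambda>i. map obs [0..<Suc n] ! i) n = ?B n"
      by (rule bh_cong) (simp add: nth_map_upt del: upt_Suc)
    thus ?thesis unfolding lEs_def by simp
  qed
  have nl: "\<not> lost (?B n) (\<sigma> (?B n))" for n
    using E run_bh[of \<sigma> obs n] unfolding eve_from_def by metis
  have inv: "advOK (?B n) \<and> (\<forall>j<n. act j = fst (\<sigma> (?B j)))" for n
  proof (induction n)
    case 0 then show ?case unfolding advOK_def by simp
  next
    case (Suc n)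
    have inSig: "fst (\<sigma> (?B n)) \<in> Sig" using nl[of n] Suc.IH unfolding lost_def by blast
    have an: "act n = fst (\<sigma> (?B n))"
      using C lE_at[of n] inSig unfolding consistent_Eve_def by (simp add: Let_def)
    have "osh (?B n) ! length (?B n) = obs n" using osh_bh[of obs n n \<sigma>, OF ob0] by (simp add: bh_len)
    hence "advOK (?B (Suc n))" using Suc.IH play_step[OF P, of n] an by (simp add: advOK_snoc)
    moreover have "\<forall>j<Suc n. act j = fst (\<sigma> (?B j))" using Suc.IH an by (auto simp: less_Suc_eq)
    ultimately show ?case by simp
  qed
  have ordn: "ordOK (?B n) (snd (\<sigma> (?B n)))" for n
    using nl[of n] inv[of n] unfolding lost_def by blast
  have Vh_B: "Vh (?B n) = Vs obs act n" for n
    unfolding Vh_def bh_len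
    by (rule Vs_cong) (use osh_bh[of obs _ n \<sigma>, OF ob0] ash_bh inv in auto)
  define A where "A v = snd (\<sigma> (?B (Ln v))) v" for v
  have Ah_B: "Ah (?B n) (snd (\<sigma> (?B n))) v = A v" if "Ln v \<le> n" for v n
  proof (cases "Ln v < n")
    case True then show ?thesis unfolding Ah_def A_def using bh_nth[of "Ln v" n] by (simp add: bh_len)
  next
    case False then have "Ln v = n" using that by simp
    then show ?thesis unfolding Ah_def A_def by (simp add: bh_len)
  qed
  have ordA: "lt (A v) (A v')" if "v \<in> {v. valid obs act v}" "v' \<in> {v. valid obs act v}" "kbn v v'" for v v'
  proof -
    let ?n = "max (Ln v) (Ln v')"
    have "v \<in> Vh (?B ?n)" "v' \<in> Vh (?B ?n)" using that unfolding Vh_B Vs_def by auto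
    hence "lt (Ah (?B ?n) (snd (\<sigma> (?B ?n))) v) (Ah (?B ?n) (snd (\<sigma> (?B ?n))) v')"
      using ordn[of ?n] that(3) unfolding ordOK_def by blast
    thus ?thesis using Ah_B[of v ?n] Ah_B[of v' ?n] by simp
  qed
  have "\<not> has_branch {v. valid obs act v}"
    by (rule embed_no_branch[OF lt_wf, of _ lr A]) (rule ordA)
  thus "winning_Eve_play Delta w obs act" using win_iff_no_branch[of obs qI Delta w act, OF ob0] by simp
qed


lemma valid_states:
  assumes v: "valid ob ac v" and obQ: "\<And>i. ob i \<subseteq> Q"
  shows "set (concat v) \<subseteq> Q"
proof
  fix x assume "x \<in> set (concat v)"
  then obtain j where j: "j < length (concat v)" "concat v ! j = x" by (metis in_set_conv_nth)
  have "pathv qI v ! Suc j = x" unfolding pathv_def using j by simp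
  moreover have "Suc j \<le> Ln v" using j unfolding Ln_def by simp
  ultimately have "x \<in> ob (Suc j)" using v unfolding validF_def by metis
  thus "x \<in> Q" using obQ by blast
qed

lemma mem_concat_length: "s \<in> set v \<Longrightarrow> length s \<le> length (concat v)"
  by (induction v) auto

lemma valid_seg: assumes "valid ob ac v" "\<And>i. ob i \<subseteq> Q" "s \<in> set v" shows "s \<in> lists Q"
  using valid_states[OF assms(1,2)] assms(3) by auto

lemma Vs_finite:
  assumes obQ: "\<And>i. ob i \<subseteq> Q"
  shows "finite (Vs ob ac n)"
proof -
  let ?S = "{s. set s \<subseteq> Q \<and> length s \<le> n}"
  have fS: "finite ?S" using finite_lists_length_le[OF finQ] .
  have "Vs ob ac n \<subseteq> {v. set v \<subseteq> ?S \<and> length v \<le> n}"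
  proof
    fix v assume "v \<in> Vs ob ac n"
    hence v: "valid ob ac v" "Ln v \<le> n" unfolding Vs_def by auto
    have ne: "\<forall>s\<in>set v. s \<noteq> []" using v(1) unfolding validF_def by blast
    have "length v \<le> n" using length_le_concat[OF ne] v(2) unfolding Ln_def by simp
    moreover have "set v \<subseteq> ?S"
    proof
      fix s assume s: "s \<in> set v"
      have "length s \<le> n" using mem_concat_length[OF s] v(2) unfolding Ln_def by simp
      moreover have "set s \<subseteq> Q" using valid_seg[OF v(1) obQ s] by auto
      ultimately show "s \<in> ?S" by simp
    qed
    ultimately show "v \<in> {v. set v \<subseteq> ?S \<and> length v \<le> n}" by simp
  qed
  moreover have "finite {v. set v \<subseteq> ?S \<and> length v \<le> n}" using finite_lists_length_le[OF fS] .
  ultimately show ?thesis by (rule finite_subset)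
qed

lemma kbn_total_valid:
  assumes "valid ob ac v" "valid ob ac v'" "\<And>i. ob i \<subseteq> Q" "v \<noteq> v'"
  shows "kbn v v' \<or> kbn v' v"
proof (rule kb_total[of "lists Q" lr])
  show "\<And>a b. a \<in> lists Q \<Longrightarrow> b \<in> lists Q \<Longrightarrow> a = b \<or> lr a b \<or> lr b a" by (rule lr_total)
  show "set v \<subseteq> lists Q" using valid_seg[OF assms(1,3)] by blast
  show "set v' \<subseteq> lists Q" using valid_seg[OF assms(2,3)] by blast
  show "v \<noteq> v'" by fact
qed

lemma valid_countable:
  assumes "\<And>i. ob i \<subseteq> Q"
  shows "countable {v. valid ob ac v}"
proof -
  have "{v. valid ob ac v} \<subseteq> lists (lists Q)"
  proof
    fix v assume "v \<in> {v. valid ob ac v}"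
    hence "valid ob ac v" by simp
    thus "v \<in> lists (lists Q)" using valid_seg[of ob ac v] assms by blast
  qed
  moreover have "countable (lists (lists Q))" using finQ by (simp add: countable_finite)
  ultimately show ?thesis by (rule countable_subset)
qed


definition x0 :: 'u where "x0 = (SOME x. x \<in> K)"
definition sortl :: "'q list list set \<Rightarrow> 'q list list list" where
  "sortl V = (SOME vs. set vs = V \<and> distinct vs \<and> sorted_wrt kbn vs)"

definition Asg where
  "Asg ob ac n (xs :: 'u list) i v = (if v \<in> Vs ob ac i then xs ! idx (sortl (Vs ob ac n)) v else x0)"

definition histX where
  "histX ob ac n xs = map (\<lambda>i. ((ac i, Asg ob ac n xs i), ob (Suc i))) [0..<n]"

definition colr where
  "colr \<tau> p xs = (case p of (os, as, a) \<Rightarrow>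
     (let o' = \<tau> (histX (\<lambda>i. os ! i) (\<lambda>i. as ! i) (length as) xs)
                  (a, Asg (\<lambda>i. os ! i) (\<lambda>i. as ! i) (length as) xs (length as))
      in if o' \<in> Obs then o' else {}))"

definition II where "II = lists Obs \<times> lists Sig \<times> Sig"

definition colf where
  "colf \<tau> H p m = (SOME col. \<forall>xs. length xs = m \<and> sorted_wrt lt xs \<and> set xs \<subseteq> H \<longrightarrow> colr \<tau> p xs = col)"

definition \<tau>A where
  "\<tau>A \<tau> H os as a = (let col = colf \<tau> H (os, as, a) (card (Vs (\<lambda>i. os ! i) (\<lambda>i. as ! i) (length as)))
     in if step_ok (last os) a col then col else (SOME o'. step_ok (last os) a o'))"

lemma Asg_cong:
  assumes "\<And>i. i \<le> n \<Longrightarrow> ob i = ob' i" "\<And>i. i < n \<Longrightarrow> ac i = ac' i" "i \<le> n"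
  shows "Asg ob ac n xs i = Asg ob' ac' n xs i"
proof -
  have a1: "Vs ob ac i = Vs ob' ac' i" using assms by (intro Vs_cong) auto
  have a2: "Vs ob ac n = Vs ob' ac' n" using assms by (intro Vs_cong) auto
  show ?thesis unfolding Asg_def by (simp only: a1 a2)
qed

lemma histX_cong:
  assumes "\<And>i. i \<le> n \<Longrightarrow> ob i = ob' i" "\<And>i. i < n \<Longrightarrow> ac i = ac' i"
  shows "histX ob ac n xs = histX ob' ac' n xs"
  unfolding histX_def using assms Asg_cong[OF assms] by (intro map_cong) auto

lemma II_countable: "countable II"
proof -
  have "finite Obs" "finite Sig" using finObs finSig by auto
  thus ?thesis unfolding II_def by (simp add: countable_finite)
qed

lemma case2:
  assumes Aw: "adam_from lost [] \<tau>s"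
  shows "adam_wins qI Sig Delta w Obs"
proof -
  interpret Dn: nkc K D by (rule D_nkc)
  have "\<forall>i\<in>II. finite (insert {} Obs) \<and> (\<forall>xs. colr \<tau>s i xs \<in> insert {} Obs)"
    using finObs unfolding colr_def by (auto simp: Let_def split: prod.splits)
  from Dn.rowbottom_countable[OF II_countable this]
  obtain H where HD: "H \<in> D" and hom: "\<forall>i\<in>II. \<forall>n. \<exists>col. \<forall>xs. length xs = n \<and> sorted_wrt lt xs \<and> set xs \<subseteq> H \<longrightarrow> colr \<tau>s i xs = col"
    by blast
  have colf: "colr \<tau>s i xs = colf \<tau>s H i (length xs)" if "i \<in> II" "sorted_wrt lt xs" "set xs \<subseteq> H" for i xs
  proof -
    have "\<exists>col. \<forall>xs'. length xs' = length xs \<and> sorted_wrt lt xs' \<and> set xs' \<subseteq> H \<longrightarrow> colr \<tau>s i xs' = col"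
      using hom that(1) by blast
    hence "\<forall>xs'. length xs' = length xs \<and> sorted_wrt lt xs' \<and> set xs' \<subseteq> H \<longrightarrow> colr \<tau>s i xs' = colf \<tau>s H i (length xs)"
      unfolding colf_def by (rule someI_ex)
    thus ?thesis using that by blast
  qed
  let ?lA = "\<tau>A \<tau>s H"
  show ?thesis
    unfolding adam_wins_def
  proof (intro exI[of _ ?lA] conjI allI impI)
    show "adam_strategy qI Sig Delta Obs ?lA"
      unfolding adam_strategy_def
    proof (intro ballI, clarify)
      fix os as a assume pr: "(os, as) \<in> Prefs qI Delta Obs" and a: "a \<in> Sig"
      then obtain obs act n where P: "is_play qI Delta Obs obs act" and os: "os = map obs [0..<Suc n]"
        unfolding Prefs_def by blast
      have "last os = obs n" unfolding os by simp
      hence lo: "last os \<in> Obs" using play_Obs[OF P] by simp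
      have ex: "\<exists>o'. step_ok (last os) a o'" by (rule step_ok_ex[OF lo a])
      have "step_ok (last os) a (?lA os as a)"
        unfolding \<tau>A_def Let_def using someI_ex[OF ex] by auto
      thus "?lA os as a \<in> Obs \<and> ?lA os as a \<inter> post Delta a (last os) \<noteq> {}" by (rule step_ok_post)
    qed
  next
    fix obs act assume pc: "is_play qI Delta Obs obs act \<and> consistent_Adam ?lA obs act"
    hence P: "is_play qI Delta Obs obs act" and C: "consistent_Adam ?lA obs act" by auto
    have ob0: "obs 0 = {qI}" using play_obs0[OF P] .
    have obQ: "\<And>i. obs i \<subseteq> Q" using play_Obs[OF P] Obs_sub by blast
    show "\<not> winning_Eve_play Delta w obs act"
    proof
      assume W: "winning_Eve_play Delta w obs act"
      let ?T = "{v. valid obs act v}"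
      have nb: "\<not> has_branch ?T" using W win_iff_no_branch[of obs qI Delta w act, OF ob0] by simp
      let ?R = "{(s, t). s \<in> ?T \<and> t \<in> ?T \<and> kbn s t}"
      have wfR: "wf ?R" using kb_wf_on_tree[OF lr_wf _ validF_pclosed nb] lr_trans by blast
      have RT: "?R \<subseteq> ?T \<times> ?T" by auto
      obtain h where hH: "\<forall>v. h v \<in> H" and hmono: "\<forall>v v'. (v, v') \<in> ?R \<longrightarrow> lt (h v) (h v')"
        using Dn.embed[OF HD valid_countable[OF obQ] wfR RT] by blast
      define V where "V n = Vs obs act n" for n
      have VT: "V n \<subseteq> ?T" for n unfolding V_def Vs_def by auto
      have Vmono: "i \<le> n \<Longrightarrow> V i \<subseteq> V n" for i n unfolding V_def Vs_def by auto
      have sl: "set (sortl (V n)) = V n \<and> distinct (sortl (V n)) \<and> sorted_wrt kbn (sortl (V n))" for n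
      proof -
        have "\<exists>vs. set vs = V n \<and> distinct vs \<and> sorted_wrt kbn vs"
        proof (rule sort_exists[of kbn])
          show "\<And>a. \<not> kbn a a" by (rule kbn_irrefl)
          show "\<And>a b c. kbn a b \<Longrightarrow> kbn b c \<Longrightarrow> kbn a c" by (rule kbn_trans)
          show "finite (V n)" unfolding V_def by (rule Vs_finite[OF obQ])
          show "\<forall>a\<in>V n. \<forall>b\<in>V n. a \<noteq> b \<longrightarrow> kbn a b \<or> kbn b a"
          proof (intro ballI impI)
            fix a b assume ab: "a \<in> V n" "b \<in> V n" "a \<noteq> b"
            have "valid obs act a" "valid obs act b" using ab VT by auto
            thus "kbn a b \<or> kbn b a" using kbn_total_valid[of obs act a b] obQ ab(3) by blast
          qed
        qed
        thus ?thesis unfolding sortl_def by (rule someI_ex)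
      qed
      define xs where "xs n = map h (sortl (V n))" for n
      have xs_sorted: "sorted_wrt lt (xs n)" for n
      proof -
        have "sorted_wrt (\<lambda>a b. lt (h a) (h b)) (sortl (V n))"
        proof (rule sorted_wrt_mono_rel[of _ kbn])
          fix a b assume "a \<in> set (sortl (V n))" "b \<in> set (sortl (V n))" "kbn a b"
          hence "(a, b) \<in> ?R" using sl[of n] VT[of n] by auto
          thus "lt (h a) (h b)" using hmono by blast
        qed (use sl in blast)
        thus ?thesis unfolding xs_def sorted_wrt_map .
      qed
      have xs_H: "set (xs n) \<subseteq> H" for n unfolding xs_def using hH by auto
      have xs_len: "length (xs n) = card (V n)" for n unfolding xs_def using sl[of n] distinct_card by fastforce
      define G where "G i v = (if v \<in> V i then h v else x0)" for i v
      have Asg_eq: "Asg obs act n (xs n) i = G i" if "i \<le> n" for i n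
      proof
        fix v
        show "Asg obs act n (xs n) i v = G i v"
        proof (cases "v \<in> V i")
          case True
          hence "v \<in> set (sortl (V n))" using sl[of n] Vmono[OF that] by auto
          from idx[OF this] have "xs n ! idx (sortl (V n)) v = h v" unfolding xs_def by simp
          thus ?thesis using True unfolding Asg_def G_def V_def by simp
        next
          case False thus ?thesis unfolding Asg_def G_def V_def by simp
        qed
      qed
      define HX where "HX n = map (\<lambda>i. ((act i, G i), obs (Suc i))) [0..<n]" for n
      have HX_len: "length (HX n) = n" for n unfolding HX_def by simp
      have HX_Suc: "HX (Suc n) = HX n @ [((act n, G n), obs (Suc n))]" for n unfolding HX_def by simp
      have histX_eq: "histX obs act n (xs n) = HX n" for n
        unfolding histX_def HX_def using Asg_eq by (intro map_cong) auto
      have osh_HX: "osh (HX n) ! i = obs i" if "i \<le> n" for i n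
      proof (cases i)
        case 0 then show ?thesis using ob0 unfolding osh_def by simp
      next
        case (Suc j) then show ?thesis using that unfolding osh_def HX_def by simp
      qed
      have ash_HX: "ash (HX n) ! i = act i" if "i < n" for i n using that unfolding ash_def HX_def by simp
      let ?os = "\<lambda>n. map obs [0..<Suc n]" and ?as = "\<lambda>n. map act [0..<n]"
      have cg1: "\<And>i. i \<le> n \<Longrightarrow> ?os n ! i = obs i" for n by (simp add: nth_map_upt del: upt_Suc)
      have cg2: "\<And>i. i < n \<Longrightarrow> ?as n ! i = act i" for n by simp
      have inII: "(?os n, ?as n, act n) \<in> II" for n
        unfolding II_def using play_Obs[OF P] play_Sig[OF P] by auto
      have colr_eq: "colr \<tau>s (?os n, ?as n, act n) (xs n) =
          (let o' = \<tau>s (HX n) (act n, G n) in if o' \<in> Obs then o' else {})" for n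
      proof -
        have "histX (\<lambda>i. ?os n ! i) (\<lambda>i. ?as n ! i) n (xs n) = histX obs act n (xs n)"
          by (rule histX_cong) (use cg1 cg2 in auto)
        moreover have "Asg (\<lambda>i. ?os n ! i) (\<lambda>i. ?as n ! i) n (xs n) n = Asg obs act n (xs n) n"
          by (rule Asg_cong) (use cg1 cg2 in auto)
        ultimately show ?thesis unfolding colr_def using histX_eq Asg_eq[of n n] by simp
      qed
      have card_eq: "card (Vs (\<lambda>i. ?os n ! i) (\<lambda>i. ?as n ! i) (length (?as n))) = card (V n)" for n
      proof -
        have "Vs (\<lambda>i. ?os n ! i) (\<lambda>i. ?as n ! i) n = Vs obs act n"
          by (rule Vs_cong) (use cg1 cg2 in auto)
        thus ?thesis unfolding V_def by simp
      qed
      have key: "\<not> step_ok (obs n) (act n) (\<tau>s (HX n) (act n, G n))"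
        if ne: "\<tau>s (HX n) (act n, G n) \<noteq> obs (Suc n)" for n
      proof
        let ?o = "\<tau>s (HX n) (act n, G n)"
        assume so: "step_ok (obs n) (act n) ?o"
        hence oO: "?o \<in> Obs" unfolding step_ok_def by simp
        have "colf \<tau>s H (?os n, ?as n, act n) (card (V n)) = colr \<tau>s (?os n, ?as n, act n) (xs n)"
          using colf[OF inII xs_sorted xs_H] xs_len by simp
        also have "\<dots> = ?o" using colr_eq[of n] oO by (simp add: Let_def)
        finally have cf: "colf \<tau>s H (?os n, ?as n, act n) (card (V n)) = ?o" .
        have "?lA (?os n) (?as n) (act n) = obs (Suc n)" using C unfolding consistent_Adam_def by blast
        moreover have "last (?os n) = obs n" by simp
        ultimately have "?o = obs (Suc n)"
          using so cf card_eq[of n] unfolding \<tau>A_def Let_def by (simp del: upt_Suc)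
        thus False using ne by simp
      qed
      define \<sigma>x where "\<sigma>x hh = (act (length hh), G (length hh))" for hh :: "(('a \<times> ('q list list \<Rightarrow> 'u)) \<times> 'q set) list"
      let ?run = "run \<sigma>x \<tau>s []"
      have runinv: "?run n = HX n \<or> \<not> advOK (?run n)" for n
      proof (induction n)
        case 0 then show ?case unfolding HX_def by simp
      next
        case (Suc n)
        show ?case
        proof (cases "?run n = HX n")
          case True
          have rS: "?run (Suc n) = HX n @ [((act n, G n), \<tau>s (HX n) (act n, G n))]"
            using True HX_len by (simp add: \<sigma>x_def)
          show ?thesis
          proof (cases "\<tau>s (HX n) (act n, G n) = obs (Suc n)")
            case tt: True
            have "?run (Suc n) = HX (Suc n)" unfolding rS HX_Suc[of n] tt ..
            then show ?thesis by (rule disjI1)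
          next
            case False
            have "osh (HX n) ! length (HX n) = obs n" using osh_HX[of n n] HX_len by simp
            have s: "\<sigma>x (HX n) = (act n, G n)" unfolding \<sigma>x_def HX_len ..
            have "\<not> advOK (HX n @ [((act n, G n), \<tau>s (HX n) (act n, G n))])"
              unfolding advOK_snoc using key[OF False] \<open>osh (HX n) ! length (HX n) = obs n\<close> by simp
            hence "\<not> advOK (?run (Suc n))" unfolding rS .
            then show ?thesis by simp
          qed
        next
          case False
          hence "\<not> advOK (?run n)" using Suc.IH by simp
          hence "\<not> advOK (?run (Suc n))" using advOK_prefix by (metis run.simps(2))
          then show ?thesis by simp
        qed
      qed
      have notlost: "\<not> lost (?run n) (\<sigma>x (?run n))" for n
      proof (cases "?run n = HX n")
        case False then show ?thesis using runinv[of n] unfolding lost_def by simp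
      next
        case True
        have s: "\<sigma>x (HX n) = (act n, G n)" unfolding \<sigma>x_def HX_len ..
        have Vh_HX: "Vh (HX n) = V n" unfolding Vh_def V_def HX_len
          by (rule Vs_cong) (use osh_HX ash_HX in auto)
        have Ah_HX: "Ah (HX n) (G n) v = h v" if "v \<in> V n" for v
        proof -
          have "v \<in> V (Ln v)" using that unfolding V_def Vs_def by simp
          moreover have "Ah (HX n) (G n) v = G (Ln v) v"
          proof (cases "Ln v < n")
            case True then show ?thesis unfolding Ah_def HX_def by simp
          next
            case False then have "Ln v = n" using that unfolding V_def Vs_def by simp
            then show ?thesis unfolding Ah_def HX_len by simp
          qed
          ultimately show ?thesis unfolding G_def by simp
        qed
        have "ordOK (HX n) (G n)" unfolding ordOK_def Vh_HX
        proof (intro ballI impI)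
          fix v v' assume vv: "v \<in> V n" "v' \<in> V n" "kbn v v'"
          hence "(v, v') \<in> ?R" using VT by auto
          thus "lt (Ah (HX n) (G n) v) (Ah (HX n) (G n) v')" using hmono Ah_HX vv by simp
        qed
        moreover have "act n \<in> Sig" using play_Sig[OF P] .
        ultimately show ?thesis unfolding lost_def True s by simp
      qed
      thus False using Aw unfolding adam_from_def by blast
    qed
  qed
qed

theorem determined: "eve_wins qI Sig Delta w Obs \<or> adam_wins qI Sig Delta w Obs"
  using gale_stewart[of lost] case1 case2 by blast

end


theorem theorem2:
  fixes Q :: "'q set" and qI :: 'q and Sig :: "'a set"
    and Delta :: "('q \<times> 'a \<times> 'q) set" and w :: "'q \<times> 'a \<times> 'q \<Rightarrow> int"
    and Obs :: "'q set set" and K :: "'u set"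
  assumes "measurable_cardinal K"
    and "MPG_limited Q qI Sig Delta Obs"
  shows "eve_wins qI Sig Delta w Obs \<or> adam_wins qI Sig Delta w Obs"
proof -
  have unc: "uncountable K" using assms(1) unfolding measurable_cardinal_def by (elim conjE)
  obtain U where uf: "ultrafilter_on K U" and np: "\<forall>x\<in>K. {x} \<notin> U"
    and cp: "\<forall>F. F \<subseteq> U \<and> F \<noteq> {} \<and> F \<prec> K \<longrightarrow> \<Inter>F \<in> U"
    using assms(1) unfolding measurable_cardinal_def by (elim conjE exE)
  interpret M: mg K U Q qI Sig Delta w Obs
  proof unfold_locales
    show "uncountable K" by (rule unc)
    show "ultrafilter_on K U" by (rule uf)
    show "\<forall>x\<in>K. {x} \<notin> U" by (rule np)
    show "\<forall>F. F \<subseteq> U \<and> F \<noteq> {} \<and> F \<prec> K \<longrightarrow> \<Inter>F \<in> U" by (rule cp)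
    show "MPG_limited Q qI Sig Delta Obs" by (rule assms(2))
  qed
  show ?thesis by (rule M.determined)
qed

end
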